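(* Let $n\ge1$ and $d\in\mathbb{N}$, define $N$ by $N(n,d)=N+1$, and let $p>0$ be a real number with $p\le d$. Let $\{r_k\}_{k\in\mathbb{N}}$ be a sequence of positive reals and $A_k=\{\mathbf{a}^k_0,\dots,\mathbf{a}^k_N\}\subset\mathbb{R}^n$ ($k\in\mathbb{N}$) sets of $N+1$ distinct points. Suppose that: (1) $A_k$ is contained in the closed ball of radius $r_k$ centred at $\mathbf{a}^k_0$; (2) $\lim_{k\to\infty}r_k=0$; (3) $\lim_{k\to\infty}\mathbf{a}^k_0=\mathbf{0}$; (4) there exist $c,e>0$ such that $|\operatorname{Det}V(A_k)|\ge c\cdot r_k^{e}$ for all $k\in\mathbb{N}$. Let $f$ be a $C^d$ function defined in a neighbourhood of $\mathbf{0}$, and put $S_k:=r_k^{-p}\max\{|f(\mathbf{x})|:\mathbf{x}\in A_k\}$ and $m:=p-\bigl(e-n\cdot N(n+1,d-1)\bigr)$. Then: (i) if $m$ is an integer and $\lim_{k\to\infty}S_k=0$, then $f$ is $m$-flat at $\mathbf{0}$; (ii) if $m$ is not an integer and $(S_k)$ is bounded, then $f$ is $[m]$-flat at $\mathbf{0}$, where $[m]$ is the largest integer not greater than $m$.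
   Context: $N(n,d):=\binom{n+d}{d}$ (with $N(m,-1):=0$). $I(n,d)$ is the set of multi-indices $\mathbf{j}\in\mathbb{Z}_{\ge0}^n$ with $|\mathbf{j}|=j_1+\dots+j_n\le d$, and $\mathbf{x}^{\mathbf{j}}=x_1^{j_1}\cdots x_n^{j_n}$. For a set $A=\{\mathbf{a}_0,\dots,\mathbf{a}_N\}$ of $N(n,d)$ points, with orderings of $A$ and $I(n,d)=\{\mathbf{j}_0,\dots,\mathbf{j}_N\}$ fixed, $V(A)=(\mathbf{a}_i^{\mathbf{j}_l})_{0\le i,l\le N}$ is the Vandermonde matrix; $|\operatorname{Det}V(A)|$ is independent of the orderings. For an integer $k\le d$, a $C^d$ function $f$ near $\mathbf{0}$ is $k$-flat at $\mathbf{0}$ if $\partial^{|\mathbf{q}|}f/\partial\mathbf{x}^{\mathbf{q}}(\mathbf{0})=0$ for all multi-indices $\mathbf{q}$ with $|\mathbf{q}|\le k$. *)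

theory Defs
  imports "HOL-Analysis.Analysis"
begin

definition Ncount :: "nat \<Rightarrow> int \<Rightarrow> nat" where
  "Ncount m k = (if k < 0 then 0 else (m + nat k) choose (nat k))"

definition mindex :: "nat \<Rightarrow> ('n::finite \<Rightarrow> nat) set" where
  "mindex d = {j. sum j UNIV \<le> d}"

definition monomial :: "real^'n \<Rightarrow> ('n::finite \<Rightarrow> nat) \<Rightarrow> real" where
  "monomial x j = (\<Prod>i\<in>UNIV. (x $ i) ^ (j i))"

definition menum :: "nat \<Rightarrow> nat \<Rightarrow> ('n::finite \<Rightarrow> nat)" where
  "menum d = (SOME g. bij_betw g {..<Ncount CARD('n) (int d)} (mindex d))"

definition vdet :: "nat \<Rightarrow> (nat \<Rightarrow> real^'n::finite) \<Rightarrow> real" where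
  "vdet d a = (let M = Ncount CARD('n) (int d) in
     \<Sum>\<sigma> | \<sigma> permutes {..<M}. of_int (sign \<sigma>) *
        (\<Prod>i<M. monomial (a i) (menum d (\<sigma> i))))"

definition partial :: "'n \<Rightarrow> (real^'n::finite \<Rightarrow> real) \<Rightarrow> real^'n \<Rightarrow> real" where
  "partial i g x = deriv (\<lambda>t. g (x + t *\<^sub>R axis i 1)) 0"

fun dpart :: "'n list \<Rightarrow> (real^'n::finite \<Rightarrow> real) \<Rightarrow> real^'n \<Rightarrow> real" where
  "dpart [] g = g"
| "dpart (i # is) g = partial i (dpart is g)"

definition Cd_on :: "nat \<Rightarrow> (real^'n::finite) set \<Rightarrow> (real^'n \<Rightarrow> real) \<Rightarrow> bool" where
  "Cd_on d U f \<longleftrightarrow>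
     (\<forall>is. length is \<le> d \<longrightarrow> continuous_on U (dpart is f)) \<and>
     (\<forall>is i. length is < d \<longrightarrow>
        (\<forall>x\<in>U. (\<lambda>t. dpart is f (x + t *\<^sub>R axis i 1)) differentiable (at 0)))"

definition flat_at0 :: "int \<Rightarrow> (real^'n::finite \<Rightarrow> real) \<Rightarrow> bool" where
  "flat_at0 k f \<longleftrightarrow> (\<forall>is. int (length is) \<le> k \<longrightarrow> dpart is f 0 = 0)"

end

theory Submission
  imports Defs "Jordan_Normal_Form.Determinant"
begin

definition Bset :: "'a set \<Rightarrow> nat \<Rightarrow> ('a \<Rightarrow> nat) set" where
  "Bset I d = {j. (\<forall>x. x \<notin> I \<longrightarrow> j x = 0) \<and> sum j I \<le> d}"

definition sfun :: "nat \<Rightarrow> nat \<Rightarrow> nat" where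
  "sfun n d = (if d = 0 then 0 else n * ((n + d) choose (d - 1)))"

lemma Bset_empty: "Bset {} d = {\<lambda>_. 0}"
  by (auto simp: Bset_def)

lemma Bset_zero: "finite I \<Longrightarrow> Bset I 0 = {\<lambda>_. 0}"
  by (auto simp: Bset_def fun_eq_iff)

lemma Bset_split:
  assumes "finite I" "x \<notin> I"
  shows "Bset (insert x I) (Suc d) = Bset I (Suc d) \<union> (\<lambda>j. j(x := Suc (j x))) ` Bset (insert x I) d"
    and "Bset I (Suc d) \<inter> (\<lambda>j. j(x := Suc (j x))) ` Bset (insert x I) d = {}"
    and "inj_on (\<lambda>j. j(x := Suc (j x))) (Bset (insert x I) d)"
proof -
  have su: "sum (j(x:=t)) I = sum j I" for j t using assms(2) by (intro sum.cong) auto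
  have si: "sum j (insert x I) = j x + sum j I" for j :: "'a \<Rightarrow> nat" using assms by simp
  show "Bset (insert x I) (Suc d) = Bset I (Suc d) \<union> (\<lambda>j. j(x := Suc (j x))) ` Bset (insert x I) d"
  proof (rule Set.set_eqI)
    fix j
    show "j \<in> Bset (insert x I) (Suc d) \<longleftrightarrow> j \<in> Bset I (Suc d) \<union> (\<lambda>j. j(x := Suc (j x))) ` Bset (insert x I) d"
    proof
      assume j: "j \<in> Bset (insert x I) (Suc d)"
      show "j \<in> Bset I (Suc d) \<union> (\<lambda>j. j(x := Suc (j x))) ` Bset (insert x I) d"
      proof (cases "j x = 0")
        case True
        have "j \<in> Bset I (Suc d)"
          unfolding Bset_def
        proof (intro CollectI conjI allI impI)
          fix y assume "y \<notin> I" then show "j y = 0" using True j by (cases "y = x") (auto simp: Bset_def)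
        next
          show "sum j I \<le> Suc d" using True j si[of j] by (auto simp: Bset_def)
        qed
        then show ?thesis by blast
      next
        case False
        then obtain t where t: "j x = Suc t" by (cases "j x") auto
        let ?j = "j(x := t)"
        have "j = ?j(x := Suc (?j x))" using t by auto
        moreover have "?j \<in> Bset (insert x I) d"
          using j t si[of j] si[of ?j] su[of j t] by (auto simp: Bset_def)
        ultimately show ?thesis by blast
      qed
    next
      assume "j \<in> Bset I (Suc d) \<union> (\<lambda>j. j(x := Suc (j x))) ` Bset (insert x I) d"
      then show "j \<in> Bset (insert x I) (Suc d)"
      proof
        assume "j \<in> Bset I (Suc d)" then show ?thesis using assms si by (auto simp: Bset_def)
      next
        assume "j \<in> (\<lambda>j. j(x := Suc (j x))) ` Bset (insert x I) d"
        then obtain i where i: "i \<in> Bset (insert x I) d" "j = i(x := Suc (i x))" by auto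
        have "sum j (insert x I) = Suc (sum i (insert x I))"
          using i(2) si[of j] si[of i] su[of i] by simp
        then show ?thesis using i by (auto simp: Bset_def)
      qed
    qed
  qed
  show "Bset I (Suc d) \<inter> (\<lambda>j. j(x := Suc (j x))) ` Bset (insert x I) d = {}"
    using assms by (auto simp: Bset_def)
  show "inj_on (\<lambda>j. j(x := Suc (j x))) (Bset (insert x I) d)"
  proof (rule inj_onI)
    fix u v assume "u(x := Suc (u x)) = v(x := Suc (v x))"
    then have "\<forall>y. (u(x := Suc (u x))) y = (v(x := Suc (v x))) y" by simp
    then have "\<forall>y. u y = v y" by (metis fun_upd_apply nat.inject)
    then show "u = v" by auto
  qed
qed

lemma Bset_finite: "finite I \<Longrightarrow> finite (Bset I d)"
proof -
  assume fI: "finite I"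
  have inj: "inj_on (\<lambda>j. restrict j I) (Bset I d)"
  proof (rule inj_onI)
    fix u v assume u: "u \<in> Bset I d" and v: "v \<in> Bset I d" and e: "restrict u I = restrict v I"
    show "u = v"
    proof
      fix y show "u y = v y"
      proof (cases "y \<in> I")
        case True then show ?thesis using e by (metis restrict_apply')
      next
        case False then show ?thesis using u v by (simp add: Bset_def)
      qed
    qed
  qed
  have sub: "(\<lambda>j. restrict j I) ` Bset I d \<subseteq> PiE I (\<lambda>_. {..d})"
  proof
    fix f assume "f \<in> (\<lambda>j. restrict j I) ` Bset I d"
    then obtain j where j: "j \<in> Bset I d" "f = restrict j I" by auto
    have "j x \<le> d" if "x \<in> I" for x
    proof -
      have "j x \<le> sum j I" using fI that by (intro member_le_sum) auto
      then show ?thesis using j by (auto simp: Bset_def)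
    qed
    then show "f \<in> PiE I (\<lambda>_. {..d})" using j by auto
  qed
  show ?thesis by (rule inj_on_finite[OF inj sub]) (simp add: fI finite_PiE)
qed

lemma Bset_count:
  assumes "finite I"
  shows "card (Bset I d) = (card I + d) choose d \<and> (\<Sum>j\<in>Bset I d. sum j I) = sfun (card I) d"
  using assms
proof (induction I arbitrary: d rule: finite_induct)
  case empty
  then show ?case by (simp add: Bset_empty sfun_def)
next
  case (insert x I)
  show ?case
  proof (induction d)
    case 0
    then show ?case using insert by (simp add: Bset_zero sfun_def)
  next
    case (Suc d)
    let ?g = "\<lambda>j. j(x := Suc (j x))"
    note sp = Bset_split[OF insert(1,2), of d]
    have f1: "finite (Bset I (Suc d))" "finite (?g ` Bset (insert x I) d)"
      using insert(1) Bset_finite[of I] Bset_finite[of "insert x I"] by auto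
    have c: "card (Bset (insert x I) (Suc d)) = card (Bset I (Suc d)) + card (Bset (insert x I) d)"
      using sp f1 by (simp add: card_Un_disjoint card_image)
    have s: "(\<Sum>j\<in>Bset (insert x I) (Suc d). sum j (insert x I)) =
       (\<Sum>j\<in>Bset I (Suc d). sum j I) + (\<Sum>j\<in>Bset (insert x I) d. Suc (sum j (insert x I)))"
    proof -
      have "(\<Sum>j\<in>Bset (insert x I) (Suc d). sum j (insert x I)) =
         (\<Sum>j\<in>Bset I (Suc d). sum j (insert x I)) + (\<Sum>j\<in>?g ` Bset (insert x I) d. sum j (insert x I))"
        using sp f1 by (simp add: sum.union_disjoint)
      also have "(\<Sum>j\<in>Bset I (Suc d). sum j (insert x I)) = (\<Sum>j\<in>Bset I (Suc d). sum j I)"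
      proof (rule sum.cong[OF refl])
        fix j assume "j \<in> Bset I (Suc d)"
        then have "j x = 0" using insert(2) by (auto simp: Bset_def)
        then show "sum j (insert x I) = sum j I" using insert(1,2) by simp
      qed
      also have "(\<Sum>j\<in>?g ` Bset (insert x I) d. sum j (insert x I)) =
          (\<Sum>j\<in>Bset (insert x I) d. sum (?g j) (insert x I))"
        using sp by (simp add: sum.reindex)
      also have "\<dots> = (\<Sum>j\<in>Bset (insert x I) d. Suc (sum j (insert x I)))"
      proof (rule sum.cong[OF refl])
        fix j assume "j \<in> Bset (insert x I) d"
        have "sum (?g j) I = sum j I" using insert(2) by (intro sum.cong) auto
        then show "sum (?g j) (insert x I) = Suc (sum j (insert x I))" using insert(1,2) by simp
      qed
      finally show ?thesis .
    qed
    have IH1: "card (Bset I (Suc d)) = (card I + Suc d) choose Suc d"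
      "(\<Sum>j\<in>Bset I (Suc d). sum j I) = sfun (card I) (Suc d)" using insert.IH by auto
    have IH2: "card (Bset (insert x I) d) = (card (insert x I) + d) choose d"
      "(\<Sum>j\<in>Bset (insert x I) d. sum j (insert x I)) = sfun (card (insert x I)) d" using Suc by auto
    have ci: "card (insert x I) = Suc (card I)" using insert by simp
    define n where "n = card I"
    have card_goal: "card (Bset (insert x I) (Suc d)) = (card (insert x I) + Suc d) choose Suc d"
      using c IH1 IH2 ci by (simp add: n_def[symmetric])
    have "(\<Sum>j\<in>Bset (insert x I) d. Suc (sum j (insert x I))) = sfun (Suc n) d + ((Suc n + d) choose d)"
      using IH2 ci by (simp add: sum_Suc n_def)
    then have ss: "(\<Sum>j\<in>Bset (insert x I) (Suc d). sum j (insert x I)) =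
        sfun n (Suc d) + sfun (Suc n) d + ((Suc n + d) choose d)"
      using s IH1 by (simp add: n_def)
    have arith: "sfun n (Suc d) + sfun (Suc n) d + ((Suc n + d) choose d) = sfun (Suc n) (Suc d)"
    proof (cases d)
      case 0 then show ?thesis by (simp add: sfun_def)
    next
      case (Suc e)
      have "(Suc n + Suc (Suc e)) choose Suc e = ((n + Suc (Suc e)) choose e) + ((n + Suc (Suc e)) choose Suc e)"
        by simp
      moreover have "(Suc n + Suc e) choose Suc e = (n + Suc (Suc e)) choose Suc e" by simp
      moreover have "(Suc n + Suc e) choose e = (n + Suc (Suc e)) choose e" by simp
      ultimately show ?thesis using Suc by (simp add: sfun_def algebra_simps)
    qed
    show ?case using card_goal ss arith ci by (simp add: n_def)
  qed
qed

lemma mindex_Bset: "mindex d = Bset (UNIV::'n::finite set) d"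
  by (simp add: mindex_def Bset_def)

lemma mindex_finite: "finite (mindex d :: ('n::finite \<Rightarrow> nat) set)"
  by (simp add: mindex_Bset Bset_finite)

lemma card_mindex: "card (mindex d :: ('n::finite \<Rightarrow> nat) set) = Ncount CARD('n) (int d)"
  using Bset_count[of "UNIV::'n set" d] by (simp add: mindex_Bset Ncount_def)

lemma sum_mindex: "d > 0 \<Longrightarrow> (\<Sum>j\<in>(mindex d :: ('n::finite \<Rightarrow> nat) set). sum j UNIV)
   = CARD('n) * Ncount (CARD('n) + 1) (int d - 1)"
  using Bset_count[of "UNIV::'n set" d]
  by (simp add: mindex_Bset Ncount_def sfun_def nat_diff_distrib)

lemma menum_bij: "bij_betw (menum d) {..<Ncount CARD('n) (int d)} (mindex d :: ('n::finite \<Rightarrow> nat) set)"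
proof -
  obtain h where "bij_betw h {0..<card (mindex d :: ('n \<Rightarrow> nat) set)} (mindex d :: ('n \<Rightarrow> nat) set)"
    using ex_bij_betw_nat_finite[OF mindex_finite] by blast
  then have "\<exists>g. bij_betw g {..<Ncount CARD('n) (int d)} (mindex d :: ('n \<Rightarrow> nat) set)"
    by (auto simp: card_mindex atLeast0LessThan)
  then show ?thesis unfolding menum_def by (rule someI_ex)
qed

section \<open>Slices and partial derivatives\<close>

lemma slice_DERIV:
  assumes "(\<lambda>t. g (y + t *\<^sub>R axis i 1)) differentiable (at 0)"
  shows "((\<lambda>t. g (y + t *\<^sub>R axis i 1)) has_real_derivative partial i g y) (at 0)"
  using assms unfolding partial_def by (simp add: DERIV_deriv_iff_real_differentiable)

lemma slice_DERIV_at: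
  assumes "(\<lambda>t. g ((y + t0 *\<^sub>R axis i 1) + t *\<^sub>R axis i 1)) differentiable (at 0)"
  shows "((\<lambda>t. g (y + t *\<^sub>R axis i 1)) has_real_derivative partial i g (y + t0 *\<^sub>R axis i 1)) (at t0)"
proof -
  have "((\<lambda>t. g ((y + t0 *\<^sub>R axis i 1) + t *\<^sub>R axis i 1)) has_real_derivative partial i g (y + t0 *\<^sub>R axis i 1)) (at 0)"
    using slice_DERIV[OF assms] .
  moreover have "(\<lambda>t. g ((y + t0 *\<^sub>R axis i 1) + t *\<^sub>R axis i 1)) = (\<lambda>t. g (y + (t + t0) *\<^sub>R axis i 1))"
    by (simp add: scaleR_add_left algebra_simps)
  ultimately have "((\<lambda>t. g (y + (t + t0) *\<^sub>R axis i 1)) has_real_derivative partial i g (y + t0 *\<^sub>R axis i 1)) (at 0)"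
    by simp
  then show ?thesis using DERIV_shift[of "\<lambda>t. g (y + t *\<^sub>R axis i 1)" _ 0 t0] by simp
qed

lemma mvt_sym:
  fixes \<phi> \<phi>' :: "real \<Rightarrow> real"
  assumes "\<And>t. \<bar>t\<bar> \<le> \<bar>s\<bar> \<Longrightarrow> (\<phi> has_real_derivative \<phi>' t) (at t)"
  shows "\<exists>\<theta>. 0 \<le> \<theta> \<and> \<theta> \<le> 1 \<and> \<phi> s - \<phi> 0 = s * \<phi>' (\<theta> * s)"
proof (cases "s = 0")
  case True then show ?thesis by (intro exI[of _ 0]) auto
next
  case False
  show ?thesis
  proof (cases "s > 0")
    case True
    obtain z where z: "0 < z" "z < s" "\<phi> s - \<phi> 0 = (s - 0) * \<phi>' z"
      using MVT2[OF True, of \<phi> \<phi>'] assms by force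
    show ?thesis using z True by (intro exI[of _ "z / s"]) auto
  next
    case f2: False
    then have "s < 0" using False by simp
    obtain z where z: "s < z" "z < 0" "\<phi> 0 - \<phi> s = (0 - s) * \<phi>' z"
      using MVT2[OF \<open>s < 0\<close>, of \<phi> \<phi>'] assms by force
    show ?thesis using z \<open>s < 0\<close> by (intro exI[of _ "z / s"]) (auto simp: field_simps)
  qed
qed

lemma norm_le_comp:
  fixes v h :: "real^'n::finite"
  assumes "\<And>i. \<bar>v $ i\<bar> \<le> \<bar>h $ i\<bar>"
  shows "norm v \<le> norm h"
  by (rule norm_le_componentwise_cart) (use assms in auto)

lemma cont_at_nhds:
  fixes g :: "'a::metric_space \<Rightarrow> 'b::metric_space"
  assumes "open U" "x \<in> U" "continuous_on U g" "e > 0"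
  shows "\<forall>\<^sub>F y in nhds x. dist (g y) (g x) < e"
proof -
  have "isCont g x" using assms continuous_on_eq_continuous_at by blast
  then have "(g \<longlongrightarrow> g x) (nhds x)" by (simp add: tendsto_nhds_iff isCont_def)
  then show ?thesis using assms(4) by (rule tendstoD)
qed

lemma partials_frechet:
  fixes g :: "real^'n::finite \<Rightarrow> real"
  assumes U: "open U" "x \<in> U"
    and sl: "\<And>y i. y \<in> U \<Longrightarrow> (\<lambda>t. g (y + t *\<^sub>R axis i 1)) differentiable (at 0)"
    and cont: "\<And>i. continuous_on U (partial i g)"
  shows "(g has_derivative (\<lambda>h. \<Sum>i\<in>UNIV. h $ i * partial i g x)) (at x)"
proof -
  have bl: "bounded_linear (\<lambda>h. \<Sum>i\<in>UNIV. h $ i * partial i g x)"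
  proof -
    have "(\<lambda>h. \<Sum>i\<in>UNIV. h $ i * partial i g x) = (\<lambda>h. inner h (\<chi> i. partial i g x))"
      by (simp add: inner_vec_def)
    then show ?thesis using bounded_linear_inner_left by metis
  qed
  define P where "P J h = (\<chi> i. if i \<in> J then h $ i else 0)" for J :: "'n set" and h :: "real^'n"
  show ?thesis unfolding has_derivative_at_alt
  proof (intro conjI bl allI impI)
    fix \<epsilon> :: real assume "\<epsilon> > 0"
    define \<epsilon>' where "\<epsilon>' = \<epsilon> / real CARD('n)"
    have "\<epsilon>' > 0" using \<open>\<epsilon> > 0\<close> by (simp add: \<epsilon>'_def)
    have "\<forall>\<^sub>F y in nhds x. y \<in> U" using U eventually_nhds_in_open by blast
    moreover have "\<forall>\<^sub>F y in nhds x. \<forall>i. dist (partial i g y) (partial i g x) < \<epsilon>'"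
      by (rule eventually_all_finite) (use cont_at_nhds[OF U cont \<open>\<epsilon>' > 0\<close>] in auto)
    ultimately have "\<forall>\<^sub>F y in nhds x. y \<in> U \<and> (\<forall>i. dist (partial i g y) (partial i g x) < \<epsilon>')"
      by eventually_elim auto
    then obtain \<delta> where \<delta>: "\<delta> > 0" "\<And>y. dist y x < \<delta> \<Longrightarrow> y \<in> U \<and> (\<forall>i. dist (partial i g y) (partial i g x) < \<epsilon>')"
      unfolding eventually_nhds_metric by blast
    show "\<exists>d>0. \<forall>y. norm (y - x) < d \<longrightarrow> norm (g y - g x - (\<Sum>i\<in>UNIV. (y - x) $ i * partial i g x)) \<le> \<epsilon> * norm (y - x)"
    proof (intro exI[of _ \<delta>] conjI allI impI \<open>\<delta> > 0\<close>)
      fix y assume ny: "norm (y - x) < \<delta>"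
      define h where "h = y - x"
      have claim: "\<bar>g (x + P J h) - g x - (\<Sum>i\<in>J. h $ i * partial i g x)\<bar> \<le> \<epsilon>' * (\<Sum>i\<in>J. \<bar>h $ i\<bar>)" for J
      proof -
        have "finite J" by simp
        then show ?thesis
        proof (induction J rule: finite_induct)
          case empty
          have "P {} h = 0" by (simp add: P_def Finite_Cartesian_Product.vec_eq_iff)
          then show ?case by simp
        next
          case (insert j J)
          have PI: "P (insert j J) h = P J h + h $ j *\<^sub>R axis j 1"
            using insert(2) by (auto simp: P_def Finite_Cartesian_Product.vec_eq_iff axis_def)
          define \<phi> where "\<phi> t = g ((x + P J h) + t *\<^sub>R axis j 1)" for t
          have inball: "dist ((x + P J h) + t *\<^sub>R axis j 1) x < \<delta>" if "\<bar>t\<bar> \<le> \<bar>h $ j\<bar>" for t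
          proof -
            have "norm (P J h + t *\<^sub>R axis j 1) \<le> norm h"
              by (rule norm_le_comp) (use that insert(2) in \<open>auto simp: P_def axis_def\<close>)
            then show ?thesis using ny by (simp add: dist_norm h_def)
          qed
          have der: "(\<phi> has_real_derivative partial j g ((x + P J h) + t *\<^sub>R axis j 1)) (at t)"
            if "\<bar>t\<bar> \<le> \<bar>h $ j\<bar>" for t
            unfolding \<phi>_def
            by (rule slice_DERIV_at) (use sl \<delta>(2)[OF inball[OF that]] in auto)
          obtain \<theta> where th: "0 \<le> \<theta>" "\<theta> \<le> 1"
            "\<phi> (h $ j) - \<phi> 0 = h $ j * partial j g ((x + P J h) + (\<theta> * h $ j) *\<^sub>R axis j 1)"
            using mvt_sym[of "h $ j" \<phi>, OF der] by blast
          have "\<bar>\<theta> * h $ j\<bar> \<le> \<bar>h $ j\<bar>" using th by (simp add: abs_mult mult_left_le_one_le)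
          then have cl: "\<bar>partial j g ((x + P J h) + (\<theta> * h $ j) *\<^sub>R axis j 1) - partial j g x\<bar> < \<epsilon>'"
            using \<delta>(2)[OF inball] by (simp add: dist_real_def)
          have e1: "g (x + P (insert j J) h) - g (x + P J h) = h $ j * partial j g ((x + P J h) + (\<theta> * h $ j) *\<^sub>R axis j 1)"
            using th(3) by (simp add: \<phi>_def PI add.assoc)
          have "\<bar>g (x + P (insert j J) h) - g (x + P J h) - h $ j * partial j g x\<bar> \<le> \<epsilon>' * \<bar>h $ j\<bar>"
          proof -
            have "\<bar>g (x + P (insert j J) h) - g (x + P J h) - h $ j * partial j g x\<bar>
                = \<bar>h $ j\<bar> * \<bar>partial j g ((x + P J h) + (\<theta> * h $ j) *\<^sub>R axis j 1) - partial j g x\<bar>"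
              by (simp add: e1 abs_mult[symmetric] algebra_simps)
            also have "\<dots> \<le> \<bar>h $ j\<bar> * \<epsilon>'" using cl by (intro mult_left_mono) auto
            finally show ?thesis by (simp add: mult.commute)
          qed
          then show ?case using insert(3) insert(1,2)
            by (simp add: sum.insert algebra_simps)
        qed
      qed
      have PU: "P UNIV h = h" by (simp add: P_def Finite_Cartesian_Product.vec_eq_iff)
      have "(\<Sum>i\<in>UNIV. \<bar>h $ i\<bar>) \<le> (\<Sum>i\<in>(UNIV::'n set). norm h)"
        by (intro sum_mono component_le_norm_cart)
      then have sn: "(\<Sum>i\<in>UNIV. \<bar>h $ i\<bar>) \<le> real CARD('n) * norm h" by simp
      have "\<bar>g y - g x - (\<Sum>i\<in>UNIV. h $ i * partial i g x)\<bar> \<le> \<epsilon>' * (\<Sum>i\<in>UNIV. \<bar>h $ i\<bar>)"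
        using claim[of UNIV] PU by (simp add: h_def)
      also have "\<dots> \<le> \<epsilon>' * (real CARD('n) * norm h)"
        using sn \<open>\<epsilon>' > 0\<close> by (intro mult_left_mono) auto
      also have "\<dots> = \<epsilon> * norm h" by (simp add: \<epsilon>'_def)
      finally show "norm (g y - g x - (\<Sum>i\<in>UNIV. (y - x) $ i * partial i g x)) \<le> \<epsilon> * norm (y - x)"
        by (simp add: h_def)
    qed
  qed
qed

lemma line_DERIV:
  fixes g :: "real^'n::finite \<Rightarrow> real"
  assumes "(g has_derivative (\<lambda>v. \<Sum>i\<in>UNIV. v $ i * c i)) (at (x0 + t *\<^sub>R h))"
  shows "((\<lambda>t. g (x0 + t *\<^sub>R h)) has_real_derivative (\<Sum>i\<in>UNIV. h $ i * c i)) (at t)"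
proof -
  have l: "((\<lambda>t. x0 + t *\<^sub>R h) has_derivative (\<lambda>t. t *\<^sub>R h)) (at t)"
    by (auto intro!: derivative_eq_intros)
  have "((\<lambda>t. g (x0 + t *\<^sub>R h)) has_derivative (\<lambda>s. \<Sum>i\<in>UNIV. (s *\<^sub>R h) $ i * c i)) (at t)"
    using has_derivative_compose[OF l assms] .
  moreover have "(\<lambda>s. \<Sum>i\<in>UNIV. (s *\<^sub>R h) $ i * c i) = (*) (\<Sum>i\<in>UNIV. h $ i * c i)"
    by (auto simp: sum_distrib_left algebra_simps)
  ultimately show ?thesis by (simp add: has_field_derivative_def)
qed

lemma Cd_cont: "Cd_on d U f \<Longrightarrow> length is \<le> d \<Longrightarrow> continuous_on U (dpart is f)"
  by (simp add: Cd_on_def)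

lemma Cd_slice: "Cd_on d U f \<Longrightarrow> length is < d \<Longrightarrow> x \<in> U \<Longrightarrow>
   (\<lambda>t. dpart is f (x + t *\<^sub>R axis i 1)) differentiable (at 0)"
  by (simp add: Cd_on_def)

lemma Cd_frechet:
  assumes "Cd_on d U f" "open U" "length is < d" "x \<in> U"
  shows "(dpart is f has_derivative (\<lambda>v. \<Sum>i\<in>UNIV. v $ i * dpart (i # is) f x)) (at x)"
proof -
  have "(dpart is f has_derivative (\<lambda>v. \<Sum>i\<in>UNIV. v $ i * partial i (dpart is f) x)) (at x)"
  proof (rule partials_frechet[OF assms(2,4)])
    show "\<And>y i. y \<in> U \<Longrightarrow> (\<lambda>t. dpart is f (y + t *\<^sub>R axis i 1)) differentiable (at 0)"
      using Cd_slice[OF assms(1,3)] .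
    show "\<And>i. continuous_on U (partial i (dpart is f))"
      using Cd_cont[OF assms(1), of "_ # is"] assms(3) by simp
  qed
  then show ?thesis by simp
qed

section \<open>Taylor along a segment\<close>

definition Lset :: "nat \<Rightarrow> 'n list set" where "Lset s = {ls. length ls = s}"

definition hprod :: "real^'n::finite \<Rightarrow> 'n list \<Rightarrow> real" where
  "hprod h ls = prod_list (map (\<lambda>i. h $ i) ls)"

definition Gs :: "(real^'n::finite \<Rightarrow> real) \<Rightarrow> nat \<Rightarrow> real^'n \<Rightarrow> real^'n \<Rightarrow> real \<Rightarrow> real" where
  "Gs f s x0 h t = (\<Sum>ls\<in>Lset s. hprod h ls * dpart ls f (x0 + t *\<^sub>R h))"

lemma finite_Lset [simp]: "finite (Lset s :: ('n::finite) list set)"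
proof -
  have "Lset s = {xs. set xs \<subseteq> (UNIV::'n set) \<and> length xs = s}" by (auto simp: Lset_def)
  then show ?thesis using finite_lists_length_eq[of "UNIV::'n set" s] by simp
qed

lemma Lset_0: "Lset 0 = {[]}" by (auto simp: Lset_def)

lemma sum_Lset_Suc:
  "(\<Sum>ls\<in>Lset (Suc s). F ls) = (\<Sum>i\<in>(UNIV::'n::finite set). \<Sum>ls\<in>Lset s. F (i # ls))"
proof -
  have e: "Lset (Suc s) = (\<lambda>(i, ls). i # ls) ` (UNIV \<times> Lset s)"
    by (auto simp: Lset_def length_Suc_conv image_iff)
  have inj: "inj_on (\<lambda>(i, ls). i # ls) (UNIV \<times> (Lset s :: 'n list set))"
    by (auto simp: inj_on_def)
  have "(\<Sum>ls\<in>Lset (Suc s). F ls) = (\<Sum>(i, ls)\<in>UNIV \<times> Lset s. F (i # ls))"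
    unfolding e by (subst sum.reindex[OF inj]) (simp add: case_prod_unfold)
  also have "\<dots> = (\<Sum>i\<in>UNIV. \<Sum>ls\<in>Lset s. F (i # ls))"
    by (simp add: sum.cartesian_product)
  finally show ?thesis .
qed

lemma Gs_0: "Gs f 0 x0 h = (\<lambda>t. f (x0 + t *\<^sub>R h))"
  by (auto simp: Gs_def Lset_0 hprod_def)

lemma Gs_DERIV:
  assumes "Cd_on d U f" "open U" "s < d" "x0 + t *\<^sub>R h \<in> U"
  shows "(Gs f s x0 h has_real_derivative Gs f (Suc s) x0 h t) (at t)"
proof -
  have "((\<lambda>t. Gs f s x0 h t) has_real_derivative
      (\<Sum>ls\<in>Lset s. hprod h ls * (\<Sum>i\<in>UNIV. h $ i * dpart (i # ls) f (x0 + t *\<^sub>R h)))) (at t)"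
    unfolding Gs_def
  proof (intro DERIV_sum DERIV_cmult)
    fix ls :: "'a list" assume "ls \<in> Lset s"
    then have "length ls < d" using assms(3) by (simp add: Lset_def)
    show "((\<lambda>t. dpart ls f (x0 + t *\<^sub>R h)) has_real_derivative
       (\<Sum>i\<in>UNIV. h $ i * dpart (i # ls) f (x0 + t *\<^sub>R h))) (at t)"
      by (rule line_DERIV) (rule Cd_frechet[OF assms(1,2) \<open>length ls < d\<close> assms(4)])
  qed
  moreover have "(\<Sum>ls\<in>Lset s. hprod h ls * (\<Sum>i\<in>UNIV. h $ i * dpart (i # ls) f (x0 + t *\<^sub>R h)))
      = Gs f (Suc s) x0 h t"
    unfolding Gs_def sum_Lset_Suc
    by (subst sum.swap) (simp add: sum_distrib_left hprod_def algebra_simps)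
  ultimately show ?thesis by simp
qed

lemma taylor_seg:
  assumes "Cd_on d U f" "open U" "0 < d" "\<And>t. 0 \<le> t \<Longrightarrow> t \<le> 1 \<Longrightarrow> x0 + t *\<^sub>R h \<in> U"
  shows "\<exists>\<tau>. 0 < \<tau> \<and> \<tau> < 1 \<and>
     f (x0 + h) = (\<Sum>s<d. Gs f s x0 h 0 / fact s) + Gs f d x0 h \<tau> / fact d"
proof -
  have "\<exists>t::real. 0 < t \<and> t < 1 \<and>
      (\<lambda>t. f (x0 + t *\<^sub>R h)) 1 = sum (\<lambda>m. (Gs f m x0 h 0 / fact m) * 1 ^ m) {..<d} + (Gs f d x0 h t / fact d) * 1 ^ d"
  proof (rule Maclaurin[of 1 d "\<lambda>m. Gs f m x0 h"])
    show "\<forall>m t. m < d \<and> 0 \<le> t \<and> t \<le> 1 \<longrightarrow> (Gs f m x0 h has_real_derivative Gs f (Suc m) x0 h t) (at t)"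
      using Gs_DERIV[OF assms(1,2)] assms(4) by blast
  qed (use assms Gs_0 in auto)
  then show ?thesis by simp
qed

section \<open>Symmetry of mixed partials\<close>

lemma axis_scale: "a *\<^sub>R axis i (1::real) = axis i a"
  by (simp add: Finite_Cartesian_Product.vec_eq_iff axis_def)

lemma mixed_mvt:
  fixes g :: "real^'n::finite \<Rightarrow> real"
  assumes sq: "\<And>a b. \<bar>a\<bar> \<le> \<bar>s\<bar> \<Longrightarrow> \<bar>b\<bar> \<le> \<bar>s\<bar> \<Longrightarrow> (x + a *\<^sub>R axis i 1) + b *\<^sub>R axis j 1 \<in> U"
    and sg: "\<And>y k. y \<in> U \<Longrightarrow> (\<lambda>t. g (y + t *\<^sub>R axis k 1)) differentiable (at 0)"
    and sgi: "\<And>y k l. y \<in> U \<Longrightarrow> (\<lambda>t. partial l g (y + t *\<^sub>R axis k 1)) differentiable (at 0)"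
  shows "\<exists>a b. \<bar>a\<bar> \<le> \<bar>s\<bar> \<and> \<bar>b\<bar> \<le> \<bar>s\<bar> \<and>
     g ((x + s *\<^sub>R axis j 1) + s *\<^sub>R axis i 1) - g (x + s *\<^sub>R axis i 1) - g (x + s *\<^sub>R axis j 1) + g x
     = s * s * partial j (partial i g) ((x + a *\<^sub>R axis i 1) + b *\<^sub>R axis j 1)"
proof -
  define \<psi> where "\<psi> t = g ((x + s *\<^sub>R axis j 1) + t *\<^sub>R axis i 1) - g (x + t *\<^sub>R axis i 1)" for t
  have inU1: "(x + s *\<^sub>R axis j 1) + t *\<^sub>R axis i 1 \<in> U" if "\<bar>t\<bar> \<le> \<bar>s\<bar>" for t
    using sq[OF that, of s] by (simp add: algebra_simps)
  have inU2: "x + t *\<^sub>R axis i 1 \<in> U" if "\<bar>t\<bar> \<le> \<bar>s\<bar>" for t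
    using sq[OF that, of 0] by simp
  have der: "(\<psi> has_real_derivative
      (partial i g ((x + s *\<^sub>R axis j 1) + t *\<^sub>R axis i 1) - partial i g (x + t *\<^sub>R axis i 1))) (at t)"
    if "\<bar>t\<bar> \<le> \<bar>s\<bar>" for t
    unfolding \<psi>_def
    by (intro DERIV_diff slice_DERIV_at sg inU1 inU2 that)
  obtain \<theta> where th: "0 \<le> \<theta>" "\<theta> \<le> 1"
    "\<psi> s - \<psi> 0 = s * (partial i g ((x + s *\<^sub>R axis j 1) + (\<theta> * s) *\<^sub>R axis i 1) - partial i g (x + (\<theta> * s) *\<^sub>R axis i 1))"
    using mvt_sym[of s \<psi>, OF der] by blast
  define a where "a = \<theta> * s"
  have a: "\<bar>a\<bar> \<le> \<bar>s\<bar>" using th by (simp add: a_def abs_mult mult_left_le_one_le)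
  define \<eta> where "\<eta> u = partial i g ((x + a *\<^sub>R axis i 1) + u *\<^sub>R axis j 1)" for u
  have der2: "(\<eta> has_real_derivative partial j (partial i g) ((x + a *\<^sub>R axis i 1) + u *\<^sub>R axis j 1)) (at u)"
    if "\<bar>u\<bar> \<le> \<bar>s\<bar>" for u
    unfolding \<eta>_def by (intro slice_DERIV_at sgi sq a that)
  obtain \<theta>' where th': "0 \<le> \<theta>'" "\<theta>' \<le> 1"
    "\<eta> s - \<eta> 0 = s * partial j (partial i g) ((x + a *\<^sub>R axis i 1) + (\<theta>' * s) *\<^sub>R axis j 1)"
    using mvt_sym[of s \<eta>, OF der2] by blast
  define b where "b = \<theta>' * s"
  have b: "\<bar>b\<bar> \<le> \<bar>s\<bar>" using th' by (simp add: b_def abs_mult mult_left_le_one_le)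
  have e1: "(x + s *\<^sub>R axis j 1) + a *\<^sub>R axis i 1 = (x + a *\<^sub>R axis i 1) + s *\<^sub>R axis j 1"
    by (simp add: algebra_simps)
  have "g ((x + s *\<^sub>R axis j 1) + s *\<^sub>R axis i 1) - g (x + s *\<^sub>R axis i 1) - g (x + s *\<^sub>R axis j 1) + g x
      = \<psi> s - \<psi> 0" by (simp add: \<psi>_def)
  also have "\<dots> = s * (\<eta> s - \<eta> 0)" using th(3) by (simp add: \<eta>_def a_def[symmetric] e1)
  also have "\<dots> = s * s * partial j (partial i g) ((x + a *\<^sub>R axis i 1) + b *\<^sub>R axis j 1)"
    using th'(3) by (simp add: b_def)
  finally show ?thesis using a b by blast
qed

lemma schwarz_pt:
  fixes g :: "real^'n::finite \<Rightarrow> real"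
  assumes U: "open U" "x \<in> U"
    and sg: "\<And>y k. y \<in> U \<Longrightarrow> (\<lambda>t. g (y + t *\<^sub>R axis k 1)) differentiable (at 0)"
    and sgi: "\<And>y k l. y \<in> U \<Longrightarrow> (\<lambda>t. partial l g (y + t *\<^sub>R axis k 1)) differentiable (at 0)"
    and c: "\<And>k l. continuous_on U (partial k (partial l g))"
  shows "partial j (partial i g) x = partial i (partial j g) x"
proof (rule ccontr)
  assume ne: "partial j (partial i g) x \<noteq> partial i (partial j g) x"
  define \<epsilon> where "\<epsilon> = \<bar>partial j (partial i g) x - partial i (partial j g) x\<bar> / 2"
  have "\<epsilon> > 0" using ne by (simp add: \<epsilon>_def)
  have "\<forall>\<^sub>F y in nhds x. y \<in> U" using U eventually_nhds_in_open by blast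
  moreover have "\<forall>\<^sub>F y in nhds x. dist (partial j (partial i g) y) (partial j (partial i g) x) < \<epsilon>"
    using cont_at_nhds[OF U c \<open>\<epsilon> > 0\<close>] by blast
  moreover have "\<forall>\<^sub>F y in nhds x. dist (partial i (partial j g) y) (partial i (partial j g) x) < \<epsilon>"
    using cont_at_nhds[OF U c \<open>\<epsilon> > 0\<close>] by blast
  ultimately have "\<forall>\<^sub>F y in nhds x. y \<in> U \<and> dist (partial j (partial i g) y) (partial j (partial i g) x) < \<epsilon>
      \<and> dist (partial i (partial j g) y) (partial i (partial j g) x) < \<epsilon>"
    by eventually_elim auto
  then obtain \<delta> where \<delta>: "\<delta> > 0" "\<And>y. dist y x < \<delta> \<Longrightarrow> y \<in> U \<and>
      dist (partial j (partial i g) y) (partial j (partial i g) x) < \<epsilon> \<and>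
      dist (partial i (partial j g) y) (partial i (partial j g) x) < \<epsilon>"
    unfolding eventually_nhds_metric by blast
  define s where "s = \<delta> / 4"
  have "s > 0" using \<delta> by (simp add: s_def)
  have near: "dist ((x + a *\<^sub>R axis k 1) + b *\<^sub>R axis l 1) x < \<delta>" if "\<bar>a\<bar> \<le> \<bar>s\<bar>" "\<bar>b\<bar> \<le> \<bar>s\<bar>" for a b k l
  proof -
    have "dist ((x + a *\<^sub>R axis k 1) + b *\<^sub>R axis l 1) x = norm (a *\<^sub>R axis k (1::real) + b *\<^sub>R axis l 1)"
      by (simp add: dist_norm)
    also have "\<dots> \<le> norm (a *\<^sub>R axis k (1::real)) + norm (b *\<^sub>R axis l (1::real))" by (rule norm_triangle_ineq)
    also have "\<dots> = \<bar>a\<bar> + \<bar>b\<bar>" by simp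
    also have "\<dots> < \<delta>" using that \<open>s > 0\<close> by (simp add: s_def)
    finally show ?thesis .
  qed
  obtain a1 b1 where ab1: "\<bar>a1\<bar> \<le> \<bar>s\<bar>" "\<bar>b1\<bar> \<le> \<bar>s\<bar>"
    "g ((x + s *\<^sub>R axis j 1) + s *\<^sub>R axis i 1) - g (x + s *\<^sub>R axis i 1) - g (x + s *\<^sub>R axis j 1) + g x
     = s * s * partial j (partial i g) ((x + a1 *\<^sub>R axis i 1) + b1 *\<^sub>R axis j 1)"
    using mixed_mvt[of s x i j U g, OF _ sg sgi] \<delta>(2)[OF near] by blast
  obtain a2 b2 where ab2: "\<bar>a2\<bar> \<le> \<bar>s\<bar>" "\<bar>b2\<bar> \<le> \<bar>s\<bar>"
    "g ((x + s *\<^sub>R axis i 1) + s *\<^sub>R axis j 1) - g (x + s *\<^sub>R axis j 1) - g (x + s *\<^sub>R axis i 1) + g x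
     = s * s * partial i (partial j g) ((x + a2 *\<^sub>R axis j 1) + b2 *\<^sub>R axis i 1)"
    using mixed_mvt[of s x j i U g, OF _ sg sgi] \<delta>(2)[OF near] by blast
  have eqg: "g ((x + s *\<^sub>R axis i 1) + s *\<^sub>R axis j 1) = g ((x + s *\<^sub>R axis j 1) + s *\<^sub>R axis i 1)"
    by (simp add: algebra_simps)
  have "s * s * partial j (partial i g) ((x + a1 *\<^sub>R axis i 1) + b1 *\<^sub>R axis j 1)
      = s * s * partial i (partial j g) ((x + a2 *\<^sub>R axis j 1) + b2 *\<^sub>R axis i 1)"
    using ab1(3) ab2(3) eqg by linarith
  then have eq: "partial j (partial i g) ((x + a1 *\<^sub>R axis i 1) + b1 *\<^sub>R axis j 1)
      = partial i (partial j g) ((x + a2 *\<^sub>R axis j 1) + b2 *\<^sub>R axis i 1)"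
    using \<open>s > 0\<close> by simp
  have d1: "dist (partial j (partial i g) ((x + a1 *\<^sub>R axis i 1) + b1 *\<^sub>R axis j 1)) (partial j (partial i g) x) < \<epsilon>"
    using \<delta>(2)[OF near[OF ab1(1,2)]] by blast
  have d2: "dist (partial i (partial j g) ((x + a2 *\<^sub>R axis j 1) + b2 *\<^sub>R axis i 1)) (partial i (partial j g) x) < \<epsilon>"
    using \<delta>(2)[OF near[OF ab2(1,2)]] by blast
  show False using d1 d2 eq unfolding dist_real_def \<epsilon>_def by argo
qed

lemma dpart_append: "dpart (p @ l) g = dpart p (dpart l g)"
  by (induction p) auto

lemma dpart_cong_U:
  assumes "open U" "\<And>y. y \<in> U \<Longrightarrow> g1 y = g2 y" "x \<in> U"
  shows "dpart p g1 x = dpart p g2 x"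
  using assms(3)
proof (induction p arbitrary: x)
  case Nil then show ?case using assms(2) by simp
next
  case (Cons i p)
  obtain r where r: "r > 0" "ball x r \<subseteq> U" using assms(1) Cons.prems open_contains_ball by blast
  have "\<forall>\<^sub>F t in nhds 0. dpart p g1 (x + t *\<^sub>R axis i 1) = dpart p g2 (x + t *\<^sub>R axis i 1)"
    unfolding eventually_nhds_metric
  proof (intro exI[of _ r] conjI allI impI r)
    fix t :: real assume "dist t 0 < r"
    then have "x + t *\<^sub>R axis i 1 \<in> ball x r" by (simp add: dist_norm)
    then show "dpart p g1 (x + t *\<^sub>R axis i 1) = dpart p g2 (x + t *\<^sub>R axis i 1)" using r Cons.IH by blast
  qed
  then show ?case by (simp add: partial_def) (rule deriv_cong_ev, auto)
qed

lemma swap_U: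
  assumes cd: "Cd_on d U f" and U: "open U" and len: "length (p @ [i, j] @ q) \<le> d" and x: "x \<in> U"
  shows "dpart (p @ [i, j] @ q) f x = dpart (p @ [j, i] @ q) f x"
proof -
  let ?g = "dpart q f"
  have "partial i (partial j ?g) y = partial j (partial i ?g) y" if "y \<in> U" for y
  proof (rule schwarz_pt[OF U that])
    show "\<And>y k. y \<in> U \<Longrightarrow> (\<lambda>t. ?g (y + t *\<^sub>R axis k 1)) differentiable (at 0)"
      using Cd_slice[OF cd] len by simp
    show "\<And>y k l. y \<in> U \<Longrightarrow> (\<lambda>t. partial l ?g (y + t *\<^sub>R axis k 1)) differentiable (at 0)"
      using Cd_slice[OF cd, of "_ # q"] len by simp
    show "\<And>k l. continuous_on U (partial k (partial l ?g))"
      using Cd_cont[OF cd, of "_ # _ # q"] len by simp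
  qed
  then have "\<And>y. y \<in> U \<Longrightarrow> dpart ([i, j] @ q) f y = dpart ([j, i] @ q) f y" by simp
  then show ?thesis unfolding dpart_append[of p] by (rule dpart_cong_U[OF U _ x])
qed

lemma move_front:
  assumes cd: "Cd_on d U f" and U: "open U" and x: "x \<in> U"
  shows "length (p @ ys @ [a] @ q) \<le> d \<Longrightarrow> dpart (p @ ys @ [a] @ q) f x = dpart (p @ [a] @ ys @ q) f x"
proof (induction ys arbitrary: p)
  case Nil then show ?case by simp
next
  case (Cons b ys)
  have "dpart (p @ (b # ys) @ [a] @ q) f x = dpart ((p @ [b]) @ ys @ [a] @ q) f x" by simp
  also have "\<dots> = dpart ((p @ [b]) @ [a] @ ys @ q) f x" using Cons by (intro Cons.IH) simp
  also have "\<dots> = dpart (p @ [b, a] @ (ys @ q)) f x" by simp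
  also have "\<dots> = dpart (p @ [a, b] @ (ys @ q)) f x" using Cons.prems by (intro swap_U[OF cd U _ x]) simp
  finally show ?case by simp
qed

lemma mset_inv:
  assumes cd: "Cd_on d U f" and U: "open U" and x: "x \<in> U"
  shows "mset xs = mset ys \<Longrightarrow> length (p @ xs) \<le> d \<Longrightarrow> dpart (p @ xs) f x = dpart (p @ ys) f x"
proof (induction xs arbitrary: p ys)
  case Nil then show ?case by simp
next
  case (Cons a xs)
  have "a \<in> set ys" using Cons.prems(1) by (metis list.set_intros(1) set_mset_mset)
  then obtain ys1 ys2 where ys: "ys = ys1 @ a # ys2" by (meson split_list)
  have m: "mset xs = mset (ys1 @ ys2)" using Cons.prems(1) ys by simp
  have ly: "length ys = Suc (length xs)" using Cons.prems(1) by (metis length_Cons mset_eq_length)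
  have "dpart (p @ ys) f x = dpart (p @ ys1 @ [a] @ ys2) f x" using ys by simp
  also have "\<dots> = dpart (p @ [a] @ ys1 @ ys2) f x"
    using Cons.prems(2) ly ys by (intro move_front[OF cd U x]) simp
  also have "\<dots> = dpart ((p @ [a]) @ (ys1 @ ys2)) f x" by simp
  also have "\<dots> = dpart ((p @ [a]) @ xs) f x" using Cons.prems(2) m by (intro Cons.IH[symmetric]) auto
  finally show ?case by simp
qed

definition cnt :: "'n list \<Rightarrow> ('n \<Rightarrow> nat)" where "cnt ls = (\<lambda>i. count (mset ls) i)"

definition Lle :: "nat \<Rightarrow> 'n list set" where "Lle d = {ls. length ls \<le> d}"

definition Cc :: "(real^'n::finite \<Rightarrow> real) \<Rightarrow> nat \<Rightarrow> real^'n \<Rightarrow> ('n \<Rightarrow> nat) \<Rightarrow> real" where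
  "Cc f d x0 j = (\<Sum>ls\<in>{ls\<in>Lle d. cnt ls = j}. dpart ls f x0 / fact (length ls))"

lemma finite_Lle [simp]: "finite (Lle d :: ('n::finite) list set)"
proof -
  have "Lle d = {xs. set xs \<subseteq> (UNIV::'n set) \<and> length xs \<le> d}" by (auto simp: Lle_def)
  then show ?thesis using finite_lists_length_le[of "UNIV::'n set" d] by simp
qed

lemma cnt_Cons: "cnt (a # ls) = (\<lambda>i. cnt ls i + (if i = a then 1 else 0))"
  by (auto simp: cnt_def)

lemma sum_cnt: "sum (cnt ls) (UNIV::'n::finite set) = length ls"
proof (induction ls)
  case Nil then show ?case by (simp add: cnt_def)
next
  case (Cons a ls)
  have "sum (cnt (a # ls)) UNIV = sum (cnt ls) UNIV + (\<Sum>i\<in>(UNIV::'n set). if i = a then 1 else 0)"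
    by (simp add: cnt_Cons sum.distrib)
  then show ?case using Cons by simp
qed

lemma hprod_cnt: "hprod h ls = monomial h (cnt ls)"
proof (induction ls)
  case Nil then show ?case by (simp add: hprod_def monomial_def cnt_def)
next
  case (Cons a ls)
  have "monomial h (cnt (a # ls)) = (\<Prod>i\<in>UNIV. h $ i ^ cnt ls i * h $ i ^ (if i = a then 1 else 0))"
    by (simp add: monomial_def cnt_Cons power_add)
  also have "\<dots> = monomial h (cnt ls) * (\<Prod>i\<in>UNIV. h $ i ^ (if i = a then 1 else 0))"
    by (simp add: prod.distrib monomial_def)
  also have "(\<Prod>i\<in>UNIV. h $ i ^ (if i = a then 1 else 0)) = (\<Prod>i\<in>UNIV. if i = a then h $ i else 1)"
    by (intro prod.cong) auto
  also have "\<dots> = h $ a" by (simp add: prod.delta)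
  finally show ?case using Cons by (simp add: hprod_def)
qed

lemma cnt_Lle_mindex: "ls \<in> Lle d \<Longrightarrow> cnt ls \<in> mindex d"
  by (simp add: Lle_def mindex_def sum_cnt)

lemma poly_regroup:
  fixes f :: "real^'n::finite \<Rightarrow> real" and h :: "real^'n"
  shows "(\<Sum>s\<le>d. Gs f s x0 h 0 / fact s) = (\<Sum>j\<in>mindex d. Cc f d x0 j * monomial h j)"
proof -
  let ?F = "\<lambda>ls. hprod h ls * dpart ls f x0 / fact (length ls)"
  have "(\<Sum>s\<le>d. Gs f s x0 h 0 / fact s) = (\<Sum>s\<le>d. \<Sum>ls\<in>Lset s. ?F ls)"
    by (intro sum.cong refl) (auto simp: Gs_def Lset_def sum_divide_distrib)
  also have "\<dots> = sum ?F (\<Union>s\<in>{..d}. Lset s)"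
    using finite_Lset[unfolded Lset_def] by (intro sum.UNION_disjoint[symmetric]) (auto simp: Lset_def)
  also have "(\<Union>s\<in>{..d}. Lset s) = (Lle d :: 'n list set)" by (auto simp: Lset_def Lle_def)
  also have "sum ?F ((Lle d :: 'n list set)) = (\<Sum>j\<in>cnt ` (Lle d :: 'n list set). \<Sum>ls\<in>{ls\<in>(Lle d :: 'n list set). cnt ls = j}. ?F ls)"
    by (rule sum.image_gen) simp
  also have "\<dots> = (\<Sum>j\<in>cnt ` (Lle d :: 'n list set). Cc f d x0 j * monomial h j)"
  proof (intro sum.cong refl)
    fix j assume "j \<in> cnt ` (Lle d :: 'n list set)"
    have "(\<Sum>ls\<in>{ls\<in>(Lle d :: 'n list set). cnt ls = j}. ?F ls) = (\<Sum>ls\<in>{ls\<in>(Lle d :: 'n list set). cnt ls = j}. monomial h j * (dpart ls f x0 / fact (length ls)))"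
      by (intro sum.cong refl) (auto simp: hprod_cnt)
    then show "(\<Sum>ls\<in>{ls\<in>(Lle d :: 'n list set). cnt ls = j}. ?F ls) = Cc f d x0 j * monomial h j"
      by (simp add: Cc_def sum_distrib_left mult.commute)
  qed
  also have "\<dots> = (\<Sum>j\<in>mindex d. Cc f d x0 j * monomial h j)"
  proof (rule sum.mono_neutral_left)
    show "finite (mindex d :: ('n \<Rightarrow> nat) set)" by (rule mindex_finite)
    show "cnt ` (Lle d :: 'n list set) \<subseteq> mindex d" using cnt_Lle_mindex by blast
    show "\<forall>j\<in>mindex d - cnt ` (Lle d :: 'n list set). Cc f d x0 j * monomial h j = 0"
    proof
      fix j assume "j \<in> mindex d - cnt ` (Lle d :: 'n list set)"
      then have "{ls\<in>(Lle d :: 'n list set). cnt ls = j} = {}" by auto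
      then show "Cc f d x0 j * monomial h j = 0" unfolding Cc_def by (simp only: sum.empty mult_zero_left)
    qed
  qed
  finally show ?thesis .
qed

lemma flat_from_Cc:
  assumes cd: "Cd_on d U f" and U: "open U" "0 \<in> U" and len: "length is \<le> d"
    and c0: "Cc f d 0 (cnt is) = 0"
  shows "dpart is f 0 = 0"
proof -
  let ?A = "{ls\<in>Lle d. cnt ls = cnt is}"
  have "\<forall>ls\<in>?A. dpart ls f 0 / fact (length ls) = dpart is f 0 / fact (length is)"
  proof
    fix ls assume "ls \<in> ?A"
    then have m: "mset ls = mset is" by (auto simp: cnt_def fun_eq_iff intro: multiset_eqI)
    then have "length ls = length is" using mset_eq_length by blast
    moreover have "dpart ([] @ is) f 0 = dpart ([] @ ls) f 0"
      using mset_inv[OF cd U(1) U(2), of "is" ls "[]"] m len by simp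
    ultimately show "dpart ls f 0 / fact (length ls) = dpart is f 0 / fact (length is)" by simp
  qed
  then have ceq: "Cc f d 0 (cnt is) = real (card ?A) * (dpart is f 0 / fact (length is))"
    unfolding Cc_def by simp
  moreover have cpos: "card ?A > 0"
  proof -
    have "is \<in> ?A" using len by (simp add: Lle_def)
    moreover have "finite ?A" by simp
    ultimately show ?thesis by (metis card_gt_0_iff empty_iff)
  qed
  ultimately have "real (card ?A) * (dpart is f 0 / fact (length is)) = 0" using c0 by simp
  moreover have rc: "real (card ?A) \<noteq> 0" using cpos by linarith
  ultimately have "dpart is f 0 / fact (length is) = 0" by (metis mult_eq_0_iff)
  then show ?thesis by simp
qed

lemma monomial_bound:
  fixes h :: "real^'n::finite"
  assumes "\<And>i. \<bar>h $ i\<bar> \<le> r"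
  shows "\<bar>monomial h j\<bar> \<le> r ^ sum j UNIV"
proof -
  have "\<bar>monomial h j\<bar> = (\<Prod>i\<in>UNIV. \<bar>h $ i\<bar> ^ j i)" by (simp add: monomial_def abs_prod power_abs)
  also have "\<dots> \<le> (\<Prod>i\<in>UNIV. r ^ j i)"
    by (intro prod_mono conjI power_mono assms) auto
  also have "\<dots> = r ^ sum j UNIV" by (simp add: power_sum)
  finally show ?thesis .
qed

lemma Gs_remainder_bound:
  fixes h :: "real^'n::finite"
  assumes "\<And>i. \<bar>h $ i\<bar> \<le> r"
  shows "\<bar>Gs f s x0 h t - Gs f s x0 h 0\<bar> \<le> r ^ s * (\<Sum>ls\<in>Lset s. \<bar>dpart ls f (x0 + t *\<^sub>R h) - dpart ls f x0\<bar>)"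
proof -
  have "\<bar>Gs f s x0 h t - Gs f s x0 h 0\<bar> = \<bar>\<Sum>ls\<in>Lset s. hprod h ls * (dpart ls f (x0 + t *\<^sub>R h) - dpart ls f x0)\<bar>"
    by (simp add: Gs_def sum_subtractf[symmetric] algebra_simps)
  also have "\<dots> \<le> (\<Sum>ls\<in>Lset s. \<bar>hprod h ls * (dpart ls f (x0 + t *\<^sub>R h) - dpart ls f x0)\<bar>)"
    by (rule sum_abs)
  also have "\<dots> \<le> (\<Sum>ls\<in>Lset s. r ^ s * \<bar>dpart ls f (x0 + t *\<^sub>R h) - dpart ls f x0\<bar>)"
  proof (intro sum_mono)
    fix ls :: "'n list" assume "ls \<in> Lset s"
    then have "\<bar>hprod h ls\<bar> \<le> r ^ s"
      using monomial_bound[OF assms, of "cnt ls"] by (simp add: hprod_cnt sum_cnt Lset_def)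
    then show "\<bar>hprod h ls * (dpart ls f (x0 + t *\<^sub>R h) - dpart ls f x0)\<bar> \<le> r ^ s * \<bar>dpart ls f (x0 + t *\<^sub>R h) - dpart ls f x0\<bar>"
      by (simp add: abs_mult mult_right_mono)
  qed
  also have "\<dots> = r ^ s * (\<Sum>ls\<in>Lset s. \<bar>dpart ls f (x0 + t *\<^sub>R h) - dpart ls f x0\<bar>)"
    by (simp add: sum_distrib_left)
  finally show ?thesis .
qed

definition Vm :: "nat \<Rightarrow> (nat \<Rightarrow> real^'n::finite) \<Rightarrow> real mat" where
  "Vm d a = mat (Ncount CARD('n) (int d)) (Ncount CARD('n) (int d)) (\<lambda>(i,l). monomial (a i) (menum d l))"

lemma vdet_det: "vdet d a = det (Vm d a)"
  unfolding vdet_def det_def Let_def Vm_def by (simp add: atLeast0LessThan)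

lemma Vm_carrier: "Vm d (a :: nat \<Rightarrow> real^'n::finite) \<in> carrier_mat (Ncount CARD('n) (int d)) (Ncount CARD('n) (int d))"
  by (simp add: Vm_def)

lemma det_bound:
  fixes A :: "real mat"
  assumes A: "A \<in> carrier_mat n n" and b: "\<And>i l. i < n \<Longrightarrow> l < n \<Longrightarrow> \<bar>A $$ (i,l)\<bar> \<le> g l"
  shows "\<bar>det A\<bar> \<le> fact n * (\<Prod>l<n. g l)"
proof -
  have dA: "det A = (\<Sum>p\<in>{p. p permutes {0..<n}}. signof p * (\<Prod>i = 0..<n. A $$ (i, p i)))"
    using A by (simp add: det_def)
  have tb: "\<bar>signof p * (\<Prod>i = 0..<n. A $$ (i, p i))\<bar> \<le> (\<Prod>l<n. g l)" if p: "p permutes {0..<n}" for p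
  proof -
    have "\<bar>signof p * (\<Prod>i = 0..<n. A $$ (i, p i))\<bar> = (\<Prod>i = 0..<n. \<bar>A $$ (i, p i)\<bar>)"
      by (simp add: abs_mult abs_prod sign_def)
    also have "\<dots> \<le> (\<Prod>i = 0..<n. g (p i))"
    proof (rule prod_mono)
      fix i assume "i \<in> {0..<n}"
      then have "p i \<in> {0..<n}" using p by (simp add: permutes_in_image)
      then show "0 \<le> \<bar>A $$ (i, p i)\<bar> \<and> \<bar>A $$ (i, p i)\<bar> \<le> g (p i)" using b \<open>i \<in> {0..<n}\<close> by auto
    qed
    also have "(\<Prod>i = 0..<n. g (p i)) = (\<Prod>i = 0..<n. g i)"
      using prod.permute[OF p, of g] by (simp add: comp_def)
    finally show ?thesis by (simp add: atLeast0LessThan)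
  qed
  have "\<bar>det A\<bar> \<le> (\<Sum>p\<in>{p. p permutes {0..<n}}. \<bar>signof p * (\<Prod>i = 0..<n. A $$ (i, p i))\<bar>)"
    unfolding dA by (rule sum_abs)
  also have "\<dots> \<le> (\<Sum>p\<in>{p. p permutes {0..<n}}. (\<Prod>l<n. g l))"
    by (rule sum_mono) (use tb in auto)
  also have "\<dots> = fact n * (\<Prod>l<n. g l)"
    by (simp add: card_permutations)
  finally show ?thesis .
qed

definition tc :: "real^'n::finite \<Rightarrow> ('n \<Rightarrow> nat) \<Rightarrow> ('n \<Rightarrow> nat) \<Rightarrow> real" where
  "tc x0 j j' = (\<Prod>i\<in>UNIV. of_nat (j' i choose j i) * (x0 $ i) ^ (j' i - j i))"

lemma monomial_expand:
  fixes b x0 :: "real^'n::finite"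
  assumes j': "j' \<in> mindex d"
  shows "monomial (b + x0) j' = (\<Sum>j\<in>mindex d. monomial b j * tc x0 j j')"
proof -
  let ?F = "\<lambda>i k. of_nat (j' i choose k) * (b $ i) ^ k * (x0 $ i) ^ (j' i - k)"
  have "monomial (b + x0) j' = (\<Prod>i\<in>UNIV. \<Sum>k\<le>j' i. ?F i k)"
    unfolding monomial_def by (simp add: binomial_ring)
  also have "\<dots> = (\<Sum>g\<in>PiE UNIV (\<lambda>i. {..j' i}). \<Prod>i\<in>UNIV. ?F i (g i))"
    by (rule prod_sum_PiE) auto
  also have "PiE UNIV (\<lambda>i. {..j' i}) = {j. \<forall>i. j i \<le> j' i}"
    by (auto simp: PiE_UNIV_domain)
  also have "(\<Sum>g\<in>{j. \<forall>i. j i \<le> j' i}. \<Prod>i\<in>UNIV. ?F i (g i)) = (\<Sum>j\<in>{j. \<forall>i. j i \<le> j' i}. monomial b j * tc x0 j j')"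
    by (intro sum.cong refl) (simp add: monomial_def tc_def prod.distrib[symmetric] algebra_simps)
  also have "\<dots> = (\<Sum>j\<in>mindex d. monomial b j * tc x0 j j')"
  proof (rule sum.mono_neutral_left)
    show "finite (mindex d :: ('n \<Rightarrow> nat) set)" by (rule mindex_finite)
    show "{j. \<forall>i. j i \<le> j' i} \<subseteq> mindex d"
    proof
      fix j assume "j \<in> {j. \<forall>i. j i \<le> j' i}"
      then have "sum j UNIV \<le> sum j' UNIV" by (intro sum_mono) auto
      then show "j \<in> mindex d" using j' by (simp add: mindex_def)
    qed
    show "\<forall>j\<in>mindex d - {j. \<forall>i. j i \<le> j' i}. monomial b j * tc x0 j j' = 0"
    proof
      fix j assume "j \<in> mindex d - {j. \<forall>i. j i \<le> j' i}"
      then obtain i where "j' i < j i" by (auto simp: not_le)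
      then have "of_nat (j' i choose j i) * (x0 $ i) ^ (j' i - j i) = (0::real)" by simp
      then have "tc x0 j j' = 0" unfolding tc_def by (intro prod_zero) (auto intro!: bexI[of _ i])
      then show "monomial b j * tc x0 j j' = 0" by simp
    qed
  qed
  finally show ?thesis .
qed

definition Tm :: "nat \<Rightarrow> real^'n::finite \<Rightarrow> real mat" where
  "Tm d x0 = mat (Ncount CARD('n) (int d)) (Ncount CARD('n) (int d)) (\<lambda>(l,l'). tc x0 (menum d l) (menum d l'))"

lemma Vm_translate:
  fixes a :: "nat \<Rightarrow> real^'n::finite"
  shows "Vm d a = Vm d (\<lambda>i. a i - x0) * Tm d x0"
proof (rule eq_matI)
  let ?M = "Ncount CARD('n) (int d)"
  show "dim_row (Vm d a) = dim_row (Vm d (\<lambda>i. a i - x0) * Tm d x0)" by (simp add: Vm_def)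
  show "dim_col (Vm d a) = dim_col (Vm d (\<lambda>i. a i - x0) * Tm d x0)" by (simp add: Vm_def Tm_def)
  fix i l' assume i: "i < dim_row (Vm d (\<lambda>i. a i - x0) * Tm d x0)" and l': "l' < dim_col (Vm d (\<lambda>i. a i - x0) * Tm d x0)"
  then have i: "i < ?M" and l': "l' < ?M" by (auto simp: Vm_def Tm_def)
  have bij: "bij_betw (menum d) {..<?M} (mindex d :: ('n \<Rightarrow> nat) set)" by (rule menum_bij)
  have "(Vm d (\<lambda>i. a i - x0) * Tm d x0) $$ (i, l') = (\<Sum>l\<in>{0..<?M}. monomial (a i - x0) (menum d l) * tc x0 (menum d l) (menum d l'))"
    using i l' by (simp add: Vm_def Tm_def scalar_prod_def)
  also have "\<dots> = (\<Sum>j\<in>mindex d. monomial (a i - x0) j * tc x0 j (menum d l'))"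
    using sum.reindex_bij_betw[OF bij, of "\<lambda>j. monomial (a i - x0) j * tc x0 j (menum d l')"]
    by (simp add: atLeast0LessThan)
  also have "\<dots> = monomial ((a i - x0) + x0) (menum d l')"
    using bij l' by (intro monomial_expand[symmetric]) (auto simp: bij_betw_def)
  also have "\<dots> = Vm d a $$ (i, l')" using i l' by (simp add: Vm_def)
  finally show "Vm d a $$ (i, l') = (Vm d (\<lambda>i. a i - x0) * Tm d x0) $$ (i, l')" by simp
qed

lemma det_Vm_translate:
  fixes a :: "nat \<Rightarrow> real^'n::finite"
  shows "det (Vm d a) = det (Vm d (\<lambda>i. a i - x0)) * det (Tm d x0)"
  by (subst Vm_translate[of d a x0]) (rule det_mult[OF Vm_carrier], simp add: Tm_def)

lemma det_Tm_tendsto: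
  fixes x :: "nat \<Rightarrow> real^'n::finite"
  assumes "x \<longlonglongrightarrow> y"
  shows "(\<lambda>k. det (Tm d (x k))) \<longlonglongrightarrow> det (Tm d y)"
proof -
  let ?M = "Ncount CARD('n) (int d)"
  have e: "det (Tm d z) = (\<Sum>p\<in>{p. p permutes {0..<?M}}. signof p * (\<Prod>i = 0..<?M. tc z (menum d i) (menum d (p i))))"
    for z :: "real^'n"
  proof -
    have "det (Tm d z) = (\<Sum>p\<in>{p. p permutes {0..<?M}}. signof p * (\<Prod>i = 0..<?M. Tm d z $$ (i, p i)))"
      by (simp add: det_def Tm_def)
    also have "\<dots> = (\<Sum>p\<in>{p. p permutes {0..<?M}}. signof p * (\<Prod>i = 0..<?M. tc z (menum d i) (menum d (p i))))"
    proof (intro sum.cong refl arg_cong2[where f="(*)"] prod.cong)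
      fix p i assume "p \<in> {p. p permutes {0..<?M}}" "i \<in> {0..<?M}"
      then have "p i < ?M" using permutes_in_image by fastforce
      then show "Tm d z $$ (i, p i) = tc z (menum d i) (menum d (p i))" using \<open>i \<in> {0..<?M}\<close> by (simp add: Tm_def)
    qed
    finally show ?thesis .
  qed
  have tc_t: "(\<lambda>k. tc (x k) j j') \<longlonglongrightarrow> tc y j j'" for j j'
    unfolding tc_def by (intro tendsto_intros assms)
  show ?thesis unfolding e by (intro tendsto_intros tc_t)
qed

lemma sum_menum:
  "(\<Sum>l<Ncount CARD('n) (int d). F (menum d l)) = (\<Sum>j\<in>(mindex d :: ('n::finite \<Rightarrow> nat) set). F j)"
  using sum.reindex_bij_betw[OF menum_bij, of F] by simp

lemma prod_menum:
  "(\<Prod>l<Ncount CARD('n) (int d). F (menum d l)) = (\<Prod>j\<in>(mindex d :: ('n::finite \<Rightarrow> nat) set). F j)"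
  using prod.reindex_bij_betw[OF menum_bij, of F] by simp

lemma Vm_entry_bound:
  fixes b :: "nat \<Rightarrow> real^'n::finite"
  assumes "\<And>t. \<bar>b i $ t\<bar> \<le> r" "i < Ncount CARD('n) (int d)" "l < Ncount CARD('n) (int d)"
  shows "\<bar>Vm d b $$ (i, l)\<bar> \<le> r ^ sum (menum d l :: 'n \<Rightarrow> nat) UNIV"
  using assms monomial_bound[of "b i" r "menum d l"] by (simp add: Vm_def)

lemma det_Vm_upper:
  fixes b :: "nat \<Rightarrow> real^'n::finite"
  assumes "\<And>i t. i < Ncount CARD('n) (int d) \<Longrightarrow> \<bar>b i $ t\<bar> \<le> r"
  shows "\<bar>det (Vm d b)\<bar> \<le> fact (Ncount CARD('n) (int d)) * r ^ (\<Sum>j\<in>(mindex d :: ('n \<Rightarrow> nat) set). sum j UNIV)"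
proof -
  have "\<bar>det (Vm d b)\<bar> \<le> fact (Ncount CARD('n) (int d)) * (\<Prod>l<Ncount CARD('n) (int d). r ^ sum (menum d l :: 'n \<Rightarrow> nat) UNIV)"
    by (rule det_bound[OF Vm_carrier]) (rule Vm_entry_bound, use assms in auto)
  also have "(\<Prod>l<Ncount CARD('n) (int d). r ^ sum (menum d l :: 'n \<Rightarrow> nat) UNIV) = r ^ (\<Sum>j\<in>(mindex d :: ('n \<Rightarrow> nat) set). sum j UNIV)"
    by (subst prod_menum[of "\<lambda>j. r ^ sum j UNIV"]) (simp add: power_sum)
  finally show ?thesis .
qed

lemma cramer_bound:
  fixes b :: "nat \<Rightarrow> real^'n::finite" and C :: "('n \<Rightarrow> nat) \<Rightarrow> real"
  assumes br: "\<And>i t. i < Ncount CARD('n) (int d) \<Longrightarrow> \<bar>b i $ t\<bar> \<le> r"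
    and Y: "\<And>i. i < Ncount CARD('n) (int d) \<Longrightarrow> \<bar>\<Sum>j\<in>mindex d. C j * monomial (b i) j\<bar> \<le> Y"
    and l: "l < Ncount CARD('n) (int d)"
  shows "\<bar>C (menum d l)\<bar> * \<bar>det (Vm d b)\<bar> * r ^ sum (menum d l :: 'n \<Rightarrow> nat) UNIV
     \<le> fact (Ncount CARD('n) (int d)) * Y * r ^ (\<Sum>j\<in>(mindex d :: ('n \<Rightarrow> nat) set). sum j UNIV)"
proof -
  define M where "M = Ncount CARD('n) (int d)"
  define A where "A = Vm d b"
  define v where "v = Matrix.vec M (\<lambda>l. C (menum d l))"
  have A: "A \<in> carrier_mat M M" unfolding A_def M_def by (rule Vm_carrier)
  have lM: "l < M" using l by (simp add: M_def)
  have Av: "(A *\<^sub>v v) $ i = (\<Sum>j\<in>mindex d. C j * monomial (b i) j)" if "i < M" for i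
  proof -
    have "(A *\<^sub>v v) $ i = (\<Sum>k\<in>{0..<M}. A $$ (i, k) * v $ k)"
      using that A by (simp add: scalar_prod_def v_def)
    also have "\<dots> = (\<Sum>k<M. C (menum d k) * monomial (b i) (menum d k))"
      using that by (intro sum.cong) (auto simp: A_def Vm_def v_def M_def)
    also have "\<dots> = (\<Sum>j\<in>mindex d. C j * monomial (b i) j)"
      unfolding M_def by (rule sum_menum)
    finally show ?thesis .
  qed
  have cr: "det (replace_col A (A *\<^sub>v v) l) = C (menum d l) * det A"
    using cramer_lemma_mat[OF A _ lM, of v] lM by (simp add: v_def)
  define g where "g l' = (if l' = l then Y else r ^ sum (menum d l' :: 'n \<Rightarrow> nat) UNIV)" for l'
  have RC: "replace_col A (A *\<^sub>v v) l \<in> carrier_mat M M" using A by (simp add: replace_col_def)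
  have "\<bar>det (replace_col A (A *\<^sub>v v) l)\<bar> \<le> fact M * (\<Prod>l'<M. g l')"
  proof (rule det_bound[OF RC])
    fix i l' assume i: "i < M" and l': "l' < M"
    show "\<bar>replace_col A (A *\<^sub>v v) l $$ (i, l')\<bar> \<le> g l'"
    proof (cases "l' = l")
      case True
      then show ?thesis using i l' A Av[OF i] Y[of i] by (simp add: replace_col_def g_def M_def)
    next
      case False
      have "\<bar>A $$ (i, l')\<bar> \<le> r ^ sum (menum d l' :: 'n \<Rightarrow> nat) UNIV"
        unfolding A_def by (rule Vm_entry_bound) (use br i l' in \<open>auto simp: M_def\<close>)
      then show ?thesis using i l' A False by (simp add: replace_col_def g_def)
    qed
  qed
  moreover have "(\<Prod>l'<M. g l') = Y * (\<Prod>l'\<in>{..<M} - {l}. r ^ sum (menum d l' :: 'n \<Rightarrow> nat) UNIV)"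
    using lM by (simp add: prod.remove[of "{..<M}" l] g_def)
  moreover have "(\<Prod>l'\<in>{..<M} - {l}. r ^ sum (menum d l' :: 'n \<Rightarrow> nat) UNIV) * r ^ sum (menum d l :: 'n \<Rightarrow> nat) UNIV
      = r ^ (\<Sum>j\<in>(mindex d :: ('n \<Rightarrow> nat) set). sum j UNIV)"
  proof -
    have "(\<Prod>l'\<in>{..<M} - {l}. r ^ sum (menum d l' :: 'n \<Rightarrow> nat) UNIV) * r ^ sum (menum d l :: 'n \<Rightarrow> nat) UNIV
       = (\<Prod>l'<M. r ^ sum (menum d l' :: 'n \<Rightarrow> nat) UNIV)"
      using lM by (simp add: prod.remove[of "{..<M}" l] mult.commute)
    also have "\<dots> = r ^ (\<Sum>j\<in>(mindex d :: ('n \<Rightarrow> nat) set). sum j UNIV)"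
      unfolding M_def by (subst prod_menum[of "\<lambda>j. r ^ sum j UNIV"]) (simp add: power_sum)
    finally show ?thesis .
  qed
  ultimately have "\<bar>C (menum d l) * det A\<bar> * r ^ sum (menum d l :: 'n \<Rightarrow> nat) UNIV
      \<le> fact M * (Y * (\<Prod>l'\<in>{..<M} - {l}. r ^ sum (menum d l' :: 'n \<Rightarrow> nat) UNIV)) * r ^ sum (menum d l :: 'n \<Rightarrow> nat) UNIV"
    using cr by (intro mult_right_mono) (auto intro: zero_le_power order_trans[OF abs_ge_zero br[OF l]])
  also have "\<dots> = fact M * Y * ((\<Prod>l'\<in>{..<M} - {l}. r ^ sum (menum d l' :: 'n \<Rightarrow> nat) UNIV) * r ^ sum (menum d l :: 'n \<Rightarrow> nat) UNIV)"
    by (simp add: algebra_simps)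
  finally show ?thesis using \<open>_ = r ^ _\<close> by (simp add: A_def M_def abs_mult)
qed

lemma taylor_decomp:
  assumes "Cd_on d U f" "open U" "0 < d" "\<And>t. 0 \<le> t \<Longrightarrow> t \<le> 1 \<Longrightarrow> x0 + t *\<^sub>R h \<in> U"
  shows "\<exists>\<tau>. 0 \<le> \<tau> \<and> \<tau> \<le> 1 \<and> f (x0 + h) = (\<Sum>j\<in>mindex d. Cc f d x0 j * monomial h j)
      + (Gs f d x0 h \<tau> - Gs f d x0 h 0) / fact d"
proof -
  obtain \<tau> where t: "0 < \<tau>" "\<tau> < 1" "f (x0 + h) = (\<Sum>s<d. Gs f s x0 h 0 / fact s) + Gs f d x0 h \<tau> / fact d"
    using taylor_seg[OF assms] by blast
  have "(\<Sum>s\<le>d. Gs f s x0 h 0 / fact s) = (\<Sum>s<d. Gs f s x0 h 0 / fact s) + Gs f d x0 h 0 / fact d"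
    by (simp add: lessThan_Suc_atMost[symmetric])
  then have "f (x0 + h) = (\<Sum>s\<le>d. Gs f s x0 h 0 / fact s) + (Gs f d x0 h \<tau> - Gs f d x0 h 0) / fact d"
    using t(3) by (simp add: diff_divide_distrib)
  then show ?thesis using t(1,2) by (intro exI[of _ \<tau>]) (auto simp: poly_regroup)
qed

definition tau :: "nat \<Rightarrow> (real^'n::finite \<Rightarrow> real) \<Rightarrow> (real^'n) set \<Rightarrow> real^'n \<Rightarrow> real^'n \<Rightarrow> real" where
  "tau d f U x0 h = (SOME \<tau>. 0 \<le> \<tau> \<and> \<tau> \<le> 1 \<and> ((\<forall>t. 0 \<le> t \<and> t \<le> 1 \<longrightarrow> x0 + t *\<^sub>R h \<in> U) \<longrightarrow>
     f (x0 + h) = (\<Sum>j\<in>mindex d. Cc f d x0 j * monomial h j) + (Gs f d x0 h \<tau> - Gs f d x0 h 0) / fact d))"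

lemma tau_prop:
  assumes "Cd_on d U f" "open U" "0 < d"
  shows "0 \<le> tau d f U x0 h \<and> tau d f U x0 h \<le> 1 \<and> ((\<forall>t. 0 \<le> t \<and> t \<le> 1 \<longrightarrow> x0 + t *\<^sub>R h \<in> U) \<longrightarrow>
     f (x0 + h) = (\<Sum>j\<in>mindex d. Cc f d x0 j * monomial h j) + (Gs f d x0 h (tau d f U x0 h) - Gs f d x0 h 0) / fact d)"
proof -
  have "\<exists>\<tau>. 0 \<le> \<tau> \<and> \<tau> \<le> 1 \<and> ((\<forall>t. 0 \<le> t \<and> t \<le> 1 \<longrightarrow> x0 + t *\<^sub>R h \<in> U) \<longrightarrow>
     f (x0 + h) = (\<Sum>j\<in>mindex d. Cc f d x0 j * monomial h j) + (Gs f d x0 h \<tau> - Gs f d x0 h 0) / fact d)"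
  proof (cases "\<forall>t. 0 \<le> t \<and> t \<le> 1 \<longrightarrow> x0 + t *\<^sub>R h \<in> U")
    case True
    then show ?thesis using taylor_decomp[OF assms, of x0 h] by blast
  next
    case False
    then show ?thesis by (intro exI[of _ 0]) auto
  qed
  then show ?thesis unfolding tau_def by (rule someI_ex)
qed

lemma ineq_manip:
  fixes X Dt r c K Fm Sk Eb Sf e p d m s :: real
  assumes r: "0 < r" "r < 1" and c: "0 < c" and K: "0 < K" and X: "0 \<le> X"
    and Dt: "c * r powr e / K \<le> Dt"
    and main: "X * Dt * r powr s \<le> Fm * (Sk * r powr p + Eb * r powr d) * r powr Sf"
    and Sk: "0 \<le> Sk" and Eb: "0 \<le> Eb" and Fm: "0 \<le> Fm"
    and sm: "s \<le> m" and md: "m = p + Sf - e" and pd: "p \<le> d"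
  shows "X \<le> Fm * K / c * (Sk * r powr (m - s) + Eb)"
proof -
  define q where "q = c * r powr e / K"
  have q: "q > 0" using r c K by (simp add: q_def)
  have "X * q * r powr s \<le> X * Dt * r powr s"
    using X Dt r by (intro mult_right_mono mult_left_mono) (auto simp: q_def)
  also note main
  finally have "X * (q * r powr s) \<le> Fm * (Sk * r powr p + Eb * r powr d) * r powr Sf" by (simp add: mult.assoc)
  then have "X \<le> Fm * (Sk * r powr p + Eb * r powr d) * r powr Sf / (q * r powr s)"
    using q r by (simp add: pos_le_divide_eq)
  also have "Fm * (Sk * r powr p + Eb * r powr d) * r powr Sf / (q * r powr s)
      = Fm * K / c * (Sk * (r powr p * r powr Sf / (r powr e * r powr s)) + Eb * (r powr d * r powr Sf / (r powr e * r powr s)))"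
    using r c K by (simp add: q_def field_simps)
  also have "r powr p * r powr Sf / (r powr e * r powr s) = r powr (m - s)"
  proof -
    have "r powr p * r powr Sf / (r powr e * r powr s) = r powr (p + Sf - (e + s))"
      using r by (simp add: powr_add[symmetric] powr_diff[symmetric])
    also have "p + Sf - (e + s) = m - s" unfolding md by simp
    finally show ?thesis .
  qed
  also have "r powr d * r powr Sf / (r powr e * r powr s) = r powr ((d - p) + (m - s))"
  proof -
    have "r powr d * r powr Sf / (r powr e * r powr s) = r powr (d + Sf - (e + s))"
      using r by (simp add: powr_add[symmetric] powr_diff[symmetric])
    also have "d + Sf - (e + s) = (d - p) + (m - s)" unfolding md by simp
    finally show ?thesis .
  qed
  also have "Fm * K / c * (Sk * r powr (m - s) + Eb * r powr ((d - p) + (m - s))) \<le> Fm * K / c * (Sk * r powr (m - s) + Eb)"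
  proof -
    have "r powr ((d - p) + (m - s)) \<le> 1" using r sm pd by (intro powr_le1) auto
    then have "Eb * r powr ((d - p) + (m - s)) \<le> Eb" using Eb by (simp add: mult_left_le)
    then show ?thesis using Fm K c by (intro mult_left_mono) auto
  qed
  finally show ?thesis .
qed

lemma Cc_tendsto:
  assumes cd: "Cd_on d U f" and U: "open U" "0 \<in> U" and x: "x \<longlonglongrightarrow> 0"
  shows "(\<lambda>k. Cc f d (x k) j) \<longlonglongrightarrow> Cc f d 0 j"
proof -
  have "(\<lambda>k. dpart ls f (x k)) \<longlonglongrightarrow> dpart ls f 0" if "ls \<in> Lle d" for ls
  proof -
    have "isCont (dpart ls f) 0"
      using Cd_cont[OF cd, of ls] that U continuous_on_eq_continuous_at by (auto simp: Lle_def)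
    then show ?thesis using x isCont_tendsto_compose by blast
  qed
  then show ?thesis unfolding Cc_def by (intro tendsto_intros) auto
qed

lemma D_diff_tendsto:
  assumes cd: "Cd_on d U f" and U: "open U" "0 \<in> U" and ls: "length ls \<le> d"
    and \<xi>: "\<xi> \<longlonglongrightarrow> 0" and y: "y \<longlonglongrightarrow> 0"
  shows "(\<lambda>k. \<bar>dpart ls f (\<xi> k) - dpart ls f (y k)\<bar>) \<longlonglongrightarrow> 0"
proof -
  have "isCont (dpart ls f) 0"
    using Cd_cont[OF cd ls] U continuous_on_eq_continuous_at by auto
  then have "(\<lambda>k. dpart ls f (\<xi> k)) \<longlonglongrightarrow> dpart ls f 0" "(\<lambda>k. dpart ls f (y k)) \<longlonglongrightarrow> dpart ls f 0"
    using \<xi> y isCont_tendsto_compose by blast+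
  then have "(\<lambda>k. dpart ls f (\<xi> k) - dpart ls f (y k)) \<longlonglongrightarrow> dpart ls f 0 - dpart ls f 0"
    by (rule tendsto_diff)
  then have "(\<lambda>k. \<bar>dpart ls f (\<xi> k) - dpart ls f (y k)\<bar>) \<longlonglongrightarrow> \<bar>dpart ls f 0 - dpart ls f 0\<bar>"
    by (rule tendsto_rabs)
  then show ?thesis by simp
qed

lemma core_flat:
  fixes d N :: nat and p c e :: real and r :: "nat \<Rightarrow> real" and a :: "nat \<Rightarrow> nat \<Rightarrow> real^'n::finite"
    and f :: "real^'n \<Rightarrow> real" and U :: "(real^'n) set" and S :: "nat \<Rightarrow> real" and m :: real
  assumes hN: "Ncount CARD('n) (int d) = N + 1"
    and hp: "0 < p" "p \<le> real d"
    and hr: "\<And>k. 0 < r k"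
    and h1: "\<And>k i. i \<le> N \<Longrightarrow> dist (a k i) (a k 0) \<le> r k"
    and h2: "r \<longlonglongrightarrow> 0"
    and h3: "(\<lambda>k. a k 0) \<longlonglongrightarrow> 0"
    and hc: "0 < c"
    and h4: "\<And>k. \<bar>vdet d (a k)\<bar> \<ge> c * r k powr e"
    and hU: "open U" "0 \<in> U"
    and hf: "Cd_on d U f"
    and Sd: "\<And>k. S k = (MAX i\<in>{..N}. \<bar>f (a k i)\<bar>) / r k powr p"
    and md: "m = p - (e - real CARD('n) * real (Ncount (CARD('n) + 1) (int d - 1)))"
    and Hs: "\<And>s::nat. real s \<le> m \<Longrightarrow> (\<lambda>k. S k * r k powr (m - real s)) \<longlonglongrightarrow> 0"
  shows "flat_at0 \<lfloor>m\<rfloor> f"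
proof -
  define M where "M = Ncount CARD('n) (int d)"
  have MN: "M = Suc N" using hN by (simp add: M_def)
  have d0: "0 < d" using hp by linarith
  define Sn where "Sn = (\<Sum>j\<in>(mindex d :: ('n \<Rightarrow> nat) set). sum j UNIV)"
  define Sf where "Sf = real Sn"
  have mEq: "m = p + Sf - e" using md sum_mindex[OF d0, where 'n='n] by (simp add: Sf_def Sn_def)
  obtain \<delta> where \<delta>: "\<delta> > 0" "ball 0 \<delta> \<subseteq> U" using hU open_contains_ball by blast
  define x0 where "x0 = (\<lambda>k. a k 0)"
  define b where "b k i = a k i - a k 0" for k i
  have x0t: "x0 \<longlonglongrightarrow> 0" using h3 by (simp add: x0_def)
  have nb: "norm (b k i) \<le> r k" if "i \<le> N" for k i using h1[OF that, of k] by (simp add: b_def dist_norm)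
  have bnd: "\<bar>b k i $ t\<bar> \<le> r k" if "i \<le> N" for k i t
    using nb[OF that, of k] component_le_norm_cart[of "b k i" t] by linarith
  define good where "good k \<longleftrightarrow> norm (x0 k) < \<delta>/2 \<and> r k < \<delta>/2 \<and> r k < 1" for k
  have ev_good: "eventually good sequentially"
  proof -
    have "eventually (\<lambda>k. norm (x0 k) < \<delta>/2) sequentially"
      by (rule order_tendstoD(2)[OF tendsto_norm_zero[OF x0t]]) (use \<delta>(1) in simp)
    moreover have "eventually (\<lambda>k. r k < \<delta>/2) sequentially" by (rule order_tendstoD(2)[OF h2]) (use \<delta>(1) in simp)
    moreover have "eventually (\<lambda>k. r k < 1) sequentially" using order_tendstoD(2)[OF h2] by simp
    ultimately show ?thesis unfolding good_def by eventually_elim auto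
  qed
  have nseg: "norm (x0 k + t *\<^sub>R b k i) \<le> norm (x0 k) + r k" if "i \<le> N" "0 \<le> t" "t \<le> 1" for k i t
  proof -
    have "norm (x0 k + t *\<^sub>R b k i) \<le> norm (x0 k) + norm (t *\<^sub>R b k i)" by (rule norm_triangle_ineq)
    also have "norm (t *\<^sub>R b k i) = t * norm (b k i)" using that by simp
    also have "t * norm (b k i) \<le> 1 * r k" using that nb[OF that(1), of k] by (intro mult_mono) auto
    finally show ?thesis by simp
  qed
  have seg: "x0 k + t *\<^sub>R b k i \<in> U" if "good k" "i \<le> N" "0 \<le> t" "t \<le> 1" for k i t
  proof -
    have "norm (x0 k + t *\<^sub>R b k i) < \<delta>" using nseg[OF that(2-4), of k] that(1) by (simp add: good_def)
    then show ?thesis using \<delta>(2) by (auto simp: dist_norm)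
  qed
  define \<tau> where "\<tau> k i = tau d f U (x0 k) (b k i)" for k i
  have \<tau>01: "0 \<le> \<tau> k i \<and> \<tau> k i \<le> 1" for k i using tau_prop[OF hf hU(1) d0] by (simp add: \<tau>_def)
  define E where "E k = (\<Sum>i<M. \<Sum>ls\<in>Lset d. \<bar>dpart ls f (x0 k + \<tau> k i *\<^sub>R b k i) - dpart ls f (x0 k)\<bar>)" for k
  have E0: "0 \<le> E k" for k unfolding E_def by (intro sum_nonneg) auto
  define Fm where "Fm k = (MAX i\<in>{..N}. \<bar>f (a k i)\<bar>)" for k
  define P where "P k h = (\<Sum>j\<in>mindex d. Cc f d (x0 k) j * monomial h j)" for k h
  have decomp: "f (a k i) = P k (b k i) + (Gs f d (x0 k) (b k i) (\<tau> k i) - Gs f d (x0 k) (b k i) 0) / fact d"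
    if "good k" "i \<le> N" for k i
  proof -
    have "x0 k + b k i = a k i" by (simp add: x0_def b_def)
    then show ?thesis using tau_prop[OF hf hU(1) d0, of "x0 k" "b k i"] seg[OF that] by (simp add: P_def \<tau>_def)
  qed
  have Rb: "\<bar>Gs f d (x0 k) (b k i) (\<tau> k i) - Gs f d (x0 k) (b k i) 0\<bar> \<le> r k ^ d * E k" if "i \<le> N" for k i
  proof -
    have "\<bar>Gs f d (x0 k) (b k i) (\<tau> k i) - Gs f d (x0 k) (b k i) 0\<bar>
        \<le> r k ^ d * (\<Sum>ls\<in>Lset d. \<bar>dpart ls f (x0 k + \<tau> k i *\<^sub>R b k i) - dpart ls f (x0 k)\<bar>)"
      by (rule Gs_remainder_bound) (rule bnd[OF that])
    also have "(\<Sum>ls\<in>Lset d. \<bar>dpart ls f (x0 k + \<tau> k i *\<^sub>R b k i) - dpart ls f (x0 k)\<bar>) \<le> E k"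
      unfolding E_def
      by (rule member_le_sum[of i "{..<M}" "\<lambda>i. \<Sum>ls\<in>Lset d. \<bar>dpart ls f (x0 k + \<tau> k i *\<^sub>R b k i) - dpart ls f (x0 k)\<bar>"])
        (use that MN in \<open>auto intro: sum_nonneg\<close>)
    then have "r k ^ d * (\<Sum>ls\<in>Lset d. \<bar>dpart ls f (x0 k + \<tau> k i *\<^sub>R b k i) - dpart ls f (x0 k)\<bar>) \<le> r k ^ d * E k"
      using hr[of k] by (intro mult_left_mono) auto
    finally show ?thesis .
  qed
  have Fmb: "\<bar>f (a k i)\<bar> \<le> Fm k" if "i \<le> N" for k i unfolding Fm_def by (rule Max_ge) (use that in auto)
  have Fm0: "0 \<le> Fm k" for k using Fmb[of 0 k] by simp
  have FmS: "Fm k = S k * r k powr p" for k using hr[of k] by (simp add: Sd Fm_def)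
  have S0: "0 \<le> S k" for k using Fm0[of k] hr[of k] by (simp add: Sd Fm_def[symmetric])
  have Pb: "\<bar>P k (b k i)\<bar> \<le> Fm k + r k ^ d * E k / fact d" if "good k" "i \<le> N" for k i
  proof -
    let ?R = "Gs f d (x0 k) (b k i) (\<tau> k i) - Gs f d (x0 k) (b k i) 0"
    have eq: "P k (b k i) = f (a k i) - ?R / fact d" using decomp[OF that] by simp
    have "\<bar>P k (b k i)\<bar> \<le> \<bar>f (a k i)\<bar> + \<bar>?R / fact d\<bar>" unfolding eq by (rule abs_triangle_ineq4)
    also have "\<bar>?R / fact d\<bar> = \<bar>?R\<bar> / fact d" by simp
    also have "\<dots> \<le> r k ^ d * E k / fact d" using Rb[OF that(2), of k] by (simp add: divide_right_mono)
    finally show ?thesis using Fmb[OF that(2), of k] by linarith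
  qed
  obtain K where K: "K > 0" "\<And>k. \<bar>det (Tm d (x0 k))\<bar> \<le> K"
  proof -
    note lim = det_Tm_tendsto[OF x0t, of d]
    have "Bseq (\<lambda>k. det (Tm d (x0 k)))" using convergent_imp_Bseq convergentI[OF lim] by blast
    then show ?thesis using that by (auto elim!: BseqE)
  qed
  have detlow: "c * r k powr e / K \<le> \<bar>det (Vm d (b k))\<bar>" for k
  proof -
    have "(\<lambda>i. a k i - x0 k) = b k" by (simp add: fun_eq_iff b_def x0_def)
    then have "vdet d (a k) = det (Vm d (b k)) * det (Tm d (x0 k))"
      using det_Vm_translate[of d "a k" "x0 k"] by (simp add: vdet_det)
    then have "c * r k powr e \<le> \<bar>det (Vm d (b k))\<bar> * \<bar>det (Tm d (x0 k))\<bar>" using h4[of k] by (simp add: abs_mult)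
    also have "\<dots> \<le> \<bar>det (Vm d (b k))\<bar> * K" using K(2) by (intro mult_left_mono) auto
    finally show ?thesis using K(1) by (simp add: pos_divide_le_eq)
  qed
  have bndM: "\<bar>b k i $ t\<bar> \<le> r k" if "i < M" for k i t using bnd[of i] that MN by simp
  have eSf: "Sf \<le> e"
  proof (rule ccontr)
    assume "\<not> Sf \<le> e"
    then have pos: "Sf - e > 0" by simp
    have up: "\<bar>det (Vm d (b k))\<bar> \<le> fact M * r k ^ Sn" for k
      using det_Vm_upper[of d "b k" "r k"] bndM by (simp add: M_def Sn_def)
    have low: "c \<le> K * fact M * r k powr (Sf - e)" for k
    proof -
      have "c * r k powr e / K \<le> fact M * r k ^ Sn" using detlow[of k] up[of k] by linarith
      then have "c * r k powr e \<le> K * (fact M * r k powr Sf)"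
        using K(1) hr[of k] by (simp add: pos_divide_le_eq powr_realpow Sf_def mult.commute)
      then have "c \<le> K * (fact M * r k powr Sf) / r k powr e" using hr[of k] by (simp add: pos_le_divide_eq)
      also have "\<dots> = K * fact M * r k powr (Sf - e)" using hr[of k] by (simp add: powr_diff)
      finally show ?thesis .
    qed
    have r0: "\<forall>\<^sub>F k in sequentially. 0 \<le> r k" using hr by (intro always_eventually allI) (auto intro: less_imp_le)
    have "(\<lambda>k. r k powr (Sf - e)) \<longlonglongrightarrow> 0"
      by (rule tendsto_zero_powrI[OF h2 tendsto_const r0 pos])
    then have "(\<lambda>k. K * fact M * r k powr (Sf - e)) \<longlonglongrightarrow> 0"
      by (rule tendsto_mult_right_zero)
    then have "c \<le> 0" using low by (intro LIMSEQ_le_const) auto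
    then show False using hc by simp
  qed
  have mled: "m \<le> real d" using mEq eSf hp by linarith
  have Cb: "eventually (\<lambda>k. \<bar>Cc f d (x0 k) (menum d l)\<bar> \<le>
      fact M * K / c * (S k * r k powr (m - real (sum (menum d l :: 'n \<Rightarrow> nat) UNIV)) + E k / fact d)) sequentially"
    if l: "l < M" and sl: "real (sum (menum d l :: 'n \<Rightarrow> nat) UNIV) \<le> m" for l
    using ev_good
  proof eventually_elim
    case (elim k)
    let ?s = "sum (menum d l :: 'n \<Rightarrow> nat) UNIV"
    have gk: "0 < r k" "r k < 1" using elim hr[of k] by (auto simp: good_def)
    have cb: "\<bar>Cc f d (x0 k) (menum d l)\<bar> * \<bar>det (Vm d (b k))\<bar> * r k ^ ?s
        \<le> fact M * (Fm k + r k ^ d * E k / fact d) * r k ^ Sn"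
    proof -
      have "\<And>i. i < M \<Longrightarrow> \<bar>\<Sum>j\<in>mindex d. Cc f d (x0 k) j * monomial (b k i) j\<bar> \<le> Fm k + r k ^ d * E k / fact d"
        using Pb[OF elim] MN by (simp add: P_def)
      then show ?thesis
        using cramer_bound[of d "b k" "r k" "Cc f d (x0 k)" "Fm k + r k ^ d * E k / fact d" l] bndM l
        by (simp add: M_def Sn_def)
    qed
    show ?case
    proof (rule ineq_manip[where Dt="\<bar>det (Vm d (b k))\<bar>" and p=p and d="real d" and Sf=Sf and e=e and s="real ?s"])
      show "\<bar>Cc f d (x0 k) (menum d l)\<bar> * \<bar>det (Vm d (b k))\<bar> * r k powr real ?s
          \<le> fact M * (S k * r k powr p + E k / fact d * r k powr real d) * r k powr Sf"
      proof -
        have p1: "r k powr real ?s = r k ^ ?s" by (rule powr_realpow[OF gk(1)])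
        have p2: "r k powr real d = r k ^ d" by (rule powr_realpow[OF gk(1)])
        have p3: "r k powr Sf = r k ^ Sn" unfolding Sf_def by (rule powr_realpow[OF gk(1)])
        have rhs: "fact M * (Fm k + r k ^ d * E k / fact d) * r k ^ Sn
            = fact M * (S k * r k powr p + E k / fact d * r k ^ d) * r k ^ Sn"
          using FmS[of k] by (simp add: ac_simps)
        show ?thesis unfolding p1 p2 p3 using cb rhs by simp
      qed
    qed (use gk hc K(1) detlow S0 E0 sl mEq hp in auto)
  qed
  have Elim: "E \<longlonglongrightarrow> 0"
  proof -
    have "(\<lambda>k. \<bar>dpart ls f (x0 k + \<tau> k i *\<^sub>R b k i) - dpart ls f (x0 k)\<bar>) \<longlonglongrightarrow> 0" if "i < M" "ls \<in> Lset d" for i ls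
    proof (rule D_diff_tendsto[OF hf hU])
      show "length ls \<le> d" using that by (simp add: Lset_def)
      show "x0 \<longlonglongrightarrow> 0" by (rule x0t)
      show "(\<lambda>k. x0 k + \<tau> k i *\<^sub>R b k i) \<longlonglongrightarrow> 0"
      proof (rule Lim_null_comparison)
        show "eventually (\<lambda>k. norm (x0 k + \<tau> k i *\<^sub>R b k i) \<le> norm (x0 k) + r k) sequentially"
          using nseg \<tau>01 that(1) MN by (intro always_eventually allI) auto
        show "(\<lambda>k. norm (x0 k) + r k) \<longlonglongrightarrow> 0" using tendsto_add[OF tendsto_norm_zero[OF x0t] h2] by simp
      qed
    qed
    then show ?thesis unfolding E_def by (intro tendsto_null_sum) auto
  qed
  have Czero: "Cc f d 0 (menum d l) = 0" if l: "l < M" and sl: "real (sum (menum d l :: 'n \<Rightarrow> nat) UNIV) \<le> m" for l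
  proof -
    let ?s = "sum (menum d l :: 'n \<Rightarrow> nat) UNIV"
    have "(\<lambda>k. S k * r k powr (m - real ?s) + E k / fact d) \<longlonglongrightarrow> 0 + 0 / fact d"
      by (intro tendsto_add tendsto_divide Hs[OF sl] Elim tendsto_const) auto
    then have "(\<lambda>k. S k * r k powr (m - real ?s) + E k / fact d) \<longlonglongrightarrow> 0" by simp
    then have lim1: "(\<lambda>k. fact M * K / c * (S k * r k powr (m - real ?s) + E k / fact d)) \<longlonglongrightarrow> 0"
      by (rule tendsto_mult_right_zero)
    have "(\<lambda>k. Cc f d (x0 k) (menum d l)) \<longlonglongrightarrow> 0"
      by (rule Lim_null_comparison[OF _ lim1]) (use Cb[OF l sl] in simp)
    moreover have "(\<lambda>k. Cc f d (x0 k) (menum d l)) \<longlonglongrightarrow> Cc f d 0 (menum d l)"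
      by (rule Cc_tendsto[OF hf hU x0t])
    ultimately show ?thesis using LIMSEQ_unique by blast
  qed
  show ?thesis unfolding flat_at0_def
  proof (intro allI impI)
    fix q :: "'n list" assume len: "int (length q) \<le> \<lfloor>m\<rfloor>"
    then have lm: "real (length q) \<le> m" by (simp add: le_floor_iff)
    then have ld: "length q \<le> d" using mled by linarith
    have jm: "cnt q \<in> mindex d" using ld by (simp add: mindex_def sum_cnt)
    then obtain l where l: "l < M" "menum d l = cnt q"
      using menum_bij[of d, where 'n='n] unfolding bij_betw_def M_def by (metis imageE lessThan_iff)
    have "Cc f d 0 (cnt q) = 0" using Czero[OF l(1)] l(2) lm by (simp add: sum_cnt)
    then show "dpart q f 0 = 0" by (rule flat_from_Cc[OF hf hU ld])
  qed
qed

theorem theorem6p2: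
  fixes d :: nat and N :: nat and p c e :: real
    and r :: "nat \<Rightarrow> real" and a :: "nat \<Rightarrow> nat \<Rightarrow> real^'n::finite"
    and f :: "real^'n \<Rightarrow> real" and U :: "(real^'n) set"
  assumes hN: "Ncount CARD('n) (int d) = N + 1"
    and hp: "0 < p" "p \<le> real d"
    and hr: "\<And>k. 0 < r k"
    and hdist: "\<And>k. inj_on (a k) {..N}"
    and h1: "\<And>k i. i \<le> N \<Longrightarrow> dist (a k i) (a k 0) \<le> r k"
    and h2: "r \<longlonglongrightarrow> 0"
    and h3: "(\<lambda>k. a k 0) \<longlonglongrightarrow> 0"
    and hc: "0 < c" and he: "0 < e"
    and h4: "\<And>k. \<bar>vdet d (a k)\<bar> \<ge> c * r k powr e"
    and hU: "open U" "0 \<in> U"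
    and hf: "Cd_on d U f"
  defines "S \<equiv> (\<lambda>k. (MAX i\<in>{..N}. \<bar>f (a k i)\<bar>) / r k powr p)"
    and "m \<equiv> p - (e - real CARD('n) * real (Ncount (CARD('n) + 1) (int d - 1)))"
  shows "(m \<in> \<int> \<longrightarrow> S \<longlonglongrightarrow> 0 \<longrightarrow> flat_at0 \<lfloor>m\<rfloor> f)
       \<and> (m \<notin> \<int> \<longrightarrow> Bseq S \<longrightarrow> flat_at0 \<lfloor>m\<rfloor> f)"
proof -
  have Sd: "\<And>k. S k = (MAX i\<in>{..N}. \<bar>f (a k i)\<bar>) / r k powr p" by (simp add: S_def)
  have md: "m = p - (e - real CARD('n) * real (Ncount (CARD('n) + 1) (int d - 1)))" by (simp add: m_def)
  note core = core_flat[OF hN hp hr h1 h2 h3 hc h4 hU hf Sd md]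
  have r0: "\<forall>\<^sub>F k in sequentially. 0 \<le> r k" using hr by (intro always_eventually allI) (auto intro: less_imp_le)
  have r1: "\<forall>\<^sub>F k in sequentially. r k < 1" using order_tendstoD(2)[OF h2] by simp
  show ?thesis
  proof (intro conjI impI)
    assume mi: "m \<in> \<int>" and St: "S \<longlonglongrightarrow> 0"
    show "flat_at0 \<lfloor>m\<rfloor> f"
    proof (rule core)
      fix s :: nat assume sm: "real s \<le> m"
      show "(\<lambda>k. S k * r k powr (m - real s)) \<longlonglongrightarrow> 0"
      proof (rule Lim_null_comparison)
        show "\<forall>\<^sub>F k in sequentially. norm (S k * r k powr (m - real s)) \<le> \<bar>S k\<bar>"
          using r1
        proof eventually_elim
          case (elim k)
          have "r k powr (m - real s) \<le> 1" using elim hr[of k] sm by (intro powr_le1) auto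
          then show ?case using hr[of k] by (simp add: abs_mult mult_left_le)
        qed
        show "(\<lambda>k. \<bar>S k\<bar>) \<longlonglongrightarrow> 0" using tendsto_rabs_zero[OF St] .
      qed
    qed
  next
    assume mi: "m \<notin> \<int>" and SB: "Bseq S"
    obtain B where B: "B > 0" "\<And>k. norm (S k) \<le> B" using SB by (auto elim!: BseqE)
    show "flat_at0 \<lfloor>m\<rfloor> f"
    proof (rule core)
      fix s :: nat assume sm: "real s \<le> m"
      have "real s \<noteq> m" using mi by (metis Ints_of_nat)
      then have pos: "m - real s > 0" using sm by simp
      have "(\<lambda>k. r k powr (m - real s)) \<longlonglongrightarrow> 0"
        by (rule tendsto_zero_powrI[OF h2 tendsto_const r0 pos])
      then have lim: "(\<lambda>k. B * r k powr (m - real s)) \<longlonglongrightarrow> 0" by (rule tendsto_mult_right_zero)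
      show "(\<lambda>k. S k * r k powr (m - real s)) \<longlonglongrightarrow> 0"
      proof (rule Lim_null_comparison[OF _ lim])
        show "\<forall>\<^sub>F k in sequentially. norm (S k * r k powr (m - real s)) \<le> B * r k powr (m - real s)"
        proof (intro always_eventually allI)
          fix k
          have "norm (S k * r k powr (m - real s)) = \<bar>S k\<bar> * r k powr (m - real s)" by (simp add: abs_mult)
          also have "\<dots> \<le> B * r k powr (m - real s)" using B(2)[of k] by (intro mult_right_mono) auto
          finally show "norm (S k * r k powr (m - real s)) \<le> B * r k powr (m - real s)" .
        qed
      qed
    qed
  qed
qed

end
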